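(* Let $\Theta=(0,1/2)$, $\theta_0\in(0,1/2)$, and consider the birth–death chain on $\{0,1,2,\dots\}$ with $p_\theta(i+1|i)=\theta$, $p_\theta(i-1|i)=1-\theta$ for $i\ge1$, and $p_\theta(1|0)=1$, with initial probability mass function $q^{(0)}$ common to all $\theta$ and satisfying $\sum_{i\ge1}i^2q^{(0)}(i)<\infty$. Let $\mathcal{F}$ be the family of Beta distributions rescaled to $(0,1/2)$ (laws of $Y/2$ with $Y\sim\mathrm{Beta}(a',b')$), let the prior $\pi$ be the rescaled Beta on $(0,1/2)$ with parameters $a,b>0$, and let $\rho_n$ be the rescaled Beta on $(0,1/2)$ with parameters $2n\theta_0$ and $n(1-2\theta_0)$. Then there are constants $C>0$ and $n_0$ such that for all $n\ge n_0$ conditions (C1)–(C3) hold with $\epsilon_n=C/\sqrt n$.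
   Context: $P^{(n)}_\theta$ is the law of $(X_0,\dots,X_n)$ with probability mass function $q^{(0)}(x_0)\prod_{i=1}^n p_\theta(x_i|x_{i-1})$; data are generated under $\theta_0$ and $\mathrm{Var}$ is under $P^{(n)}_{\theta_0}$. $r_n(\theta,\theta_0):=\log(p^{(n)}_{\theta_0}(X^n)/p^{(n)}_\theta(X^n))$ (convention $0\log(0/0)=0$); $\mathcal{K}$ is KL divergence. Conditions: (C1) $\int\mathcal{K}(P^{(n)}_{\theta_0},P^{(n)}_\theta)\rho_n(d\theta)\le n\epsilon_n$; (C2) $\int\mathrm{Var}(r_n(\theta,\theta_0))\rho_n(d\theta)\le n\epsilon_n$; (C3) $\mathcal{K}(\rho_n,\pi)\le n\epsilon_n$. *)

theory Defs
  imports "HOL-Probability.Probability"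
begin

definition bd_trans :: "real \<Rightarrow> nat \<Rightarrow> nat \<Rightarrow> real" where
  "bd_trans \<theta> i j =
     (if i = 0 then (if j = 1 then 1 else 0)
      else if j = Suc i then \<theta>
      else if Suc j = i then 1 - \<theta>
      else 0)"

definition chain_paths :: "nat \<Rightarrow> (nat \<Rightarrow> nat) set" where
  "chain_paths n = {..n} \<rightarrow>\<^sub>E (UNIV :: nat set)"

definition path_pmf :: "(nat \<Rightarrow> real) \<Rightarrow> real \<Rightarrow> nat \<Rightarrow> (nat \<Rightarrow> nat) \<Rightarrow> real" where
  "path_pmf q0 \<theta> n x = q0 (x 0) * (\<Prod>i\<in>{1..n}. bd_trans \<theta> (x (i - 1)) (x i))"

definition path_law :: "(nat \<Rightarrow> real) \<Rightarrow> real \<Rightarrow> nat \<Rightarrow> (nat \<Rightarrow> nat) measure" where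
  "path_law q0 \<theta> n = density (count_space (chain_paths n)) (\<lambda>x. ennreal (path_pmf q0 \<theta> n x))"

definition log_lik_ratio :: "(nat \<Rightarrow> real) \<Rightarrow> nat \<Rightarrow> real \<Rightarrow> real \<Rightarrow> (nat \<Rightarrow> nat) \<Rightarrow> real" where
  "log_lik_ratio q0 n \<theta> \<theta>0 x =
     (if path_pmf q0 \<theta>0 n x = 0 \<and> path_pmf q0 \<theta> n x = 0 then 0
      else ln (path_pmf q0 \<theta>0 n x / path_pmf q0 \<theta> n x))"

text \<open>KL P Q = K(P,Q) = integral of log(dP/dQ) dP (natural log), via the library.\<close>
definition KL :: "'a measure \<Rightarrow> 'a measure \<Rightarrow> real" where
  "KL P Q = KL_divergence (exp 1) Q P"

definition var_under :: "'a measure \<Rightarrow> ('a \<Rightarrow> real) \<Rightarrow> real" where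
  "var_under P X = (\<integral>x. (X x - (\<integral>y. X y \<partial>P))\<^sup>2 \<partial>P)"

definition beta_measure :: "real \<Rightarrow> real \<Rightarrow> real measure" where
  "beta_measure a b = density lborel
     (\<lambda>x. ennreal (indicator {0<..<1} x * x powr (a - 1) * (1 - x) powr (b - 1) / Beta a b))"

definition rbeta :: "real \<Rightarrow> real \<Rightarrow> real measure" where
  "rbeta a b = distr (beta_measure a b) lborel (\<lambda>y. y / 2)"

end

theory Submission
  imports Defs
begin

definition bdens :: "real \<Rightarrow> real \<Rightarrow> real \<Rightarrow> real" where
  "bdens a b x = indicator {0<..<1} x * x powr (a - 1) * (1 - x) powr (b - 1) / Beta a b"

lemma Beta_pos: "0 < a \<Longrightarrow> 0 < b \<Longrightarrow> 0 < Beta a (b::real)"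
  unfolding Beta_def by simp

lemma bdens_nonneg: "0 < a \<Longrightarrow> 0 < b \<Longrightarrow> 0 \<le> bdens a b x"
  unfolding bdens_def using Beta_pos[of a b] by (auto simp: indicator_def)

lemma beta_measure_eq: "beta_measure a b = density lborel (\<lambda>x. ennreal (bdens a b x))"
  unfolding beta_measure_def bdens_def ..

lemma bdens_measurable[measurable]: "bdens a b \<in> borel_measurable borel"
  unfolding bdens_def by measurable

lemma beta_int_raw:
  fixes p q :: real
  assumes "0 < p" "0 < q"
  shows "has_bochner_integral lborel (\<lambda>x. indicator {0<..<1} x * x powr (p - 1) * (1 - x) powr (q - 1)) (Beta p q)"
proof -
  have I: "((\<lambda>t. t powr (p - 1) * (1 - t) powr (q - 1)) has_integral Beta p q) {0<..<1}"
    using has_integral_Beta_real[of p q] assms by (simp add: has_integral_Icc_iff_Ioo)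
  have e: "\<And>x. ennreal (x powr (p - 1) * (1 - x) powr (q - 1)) * indicator {0<..<1} x = ennreal (indicator {0<..<1} x * x powr (p - 1) * (1 - x) powr (q - 1))"
    by (simp add: indicator_def)
  have "integral\<^sup>N lborel (\<lambda>x. ennreal (x powr (p - 1) * (1 - x) powr (q - 1)) * indicator {0<..<1} x) = ennreal (Beta p q)"
    by (rule nn_integral_has_integral_lebesgue'[OF _ I]) auto
  then have "integral\<^sup>N lborel (\<lambda>x. ennreal (indicator {0<..<1} x * x powr (p - 1) * (1 - x) powr (q - 1))) = ennreal (Beta p q)"
    by (simp only: e)
  then show ?thesis
    by (intro has_bochner_integral_nn_integral) (auto simp: indicator_def less_imp_le[OF Beta_pos[OF assms]])
qed

lemma beta_moment:
  fixes a b e :: real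
  assumes "0 < a" "0 < b" "0 < a + e"
  shows "has_bochner_integral lborel (\<lambda>x. bdens a b x * x powr e) (Beta (a + e) b / Beta a b)"
proof -
  have "has_bochner_integral lborel (\<lambda>x. indicator {0<..<1} x * x powr (a + e - 1) * (1 - x) powr (b - 1) / Beta a b) (Beta (a + e) b / Beta a b)"
    using beta_int_raw[of "a+e" b] assms by (intro has_bochner_integral_divide_zero) auto
  then show ?thesis
    by (rule has_bochner_integral_cong[THEN iffD1, rotated -1])
       (auto simp: bdens_def indicator_def powr_add[symmetric] algebra_simps)
qed

lemma rbeta_density:
  "rbeta a b = density lborel (\<lambda>\<theta>. ennreal (2 * bdens a b (2 * \<theta>)))"
proof (rule measure_eqI)
  show "sets (rbeta a b) = sets (density lborel (\<lambda>\<theta>. ennreal (2 * bdens a b (2 * \<theta>))))"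
    by (simp add: rbeta_def)
  fix A assume A: "A \<in> sets (rbeta a b)"
  then have Ab[measurable]: "A \<in> sets borel" by (simp add: rbeta_def)
  have "emeasure (rbeta a b) A = (\<integral>\<^sup>+ y. ennreal (bdens a b y) * indicator A (y/2) \<partial>lborel)"
  proof -
    have "(\<lambda>y::real. y/2) -` A \<inter> space borel \<in> sets borel" by (rule measurable_sets[OF _ Ab]) simp
    then have [measurable]: "(\<lambda>y::real. y/2) -` A \<in> sets borel" by simp
    show ?thesis unfolding rbeta_def beta_measure_eq
      by (subst emeasure_distr) (auto simp: emeasure_density intro!: nn_integral_cong split: split_indicator)
  qed
  also have "\<dots> = 2 * (\<integral>\<^sup>+ \<theta>. ennreal (bdens a b (0 + 2 * \<theta>)) * indicator A ((0 + 2 * \<theta>)/2) \<partial>lborel)"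
    by (subst nn_integral_real_affine[where c=2 and t=0]) auto
  also have "\<dots> = (\<integral>\<^sup>+ \<theta>. ennreal (2 * bdens a b (2 * \<theta>)) * indicator A \<theta> \<partial>lborel)"
    by (subst nn_integral_cmult[symmetric]) (auto simp: ennreal_mult' mult.assoc intro!: nn_integral_cong)
  also have "\<dots> = emeasure (density lborel (\<lambda>\<theta>. ennreal (2 * bdens a b (2 * \<theta>)))) A"
    by (subst emeasure_density) auto
  finally show "emeasure (rbeta a b) A = emeasure (density lborel (\<lambda>\<theta>. ennreal (2 * bdens a b (2 * \<theta>)))) A" .
qed

lemma AE_rbeta: "AE \<theta> in rbeta a b. 0 < \<theta> \<and> \<theta> < 1/2"
  unfolding rbeta_density
  by (subst AE_density) (auto simp: bdens_def indicator_def)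

lemma nn_integral_rbeta:
  assumes [measurable]: "h \<in> borel_measurable borel"
  shows "(\<integral>\<^sup>+ \<theta>. h \<theta> \<partial>rbeta a b) = (\<integral>\<^sup>+ y. ennreal (bdens a b y) * h (y/2) \<partial>lborel)"
  unfolding rbeta_def beta_measure_eq
  by (subst nn_integral_distr) (auto simp: nn_integral_density)

lemma integral_rbeta:
  fixes h :: "real \<Rightarrow> real"
  assumes [measurable]: "h \<in> borel_measurable borel" and "0 < a" "0 < b"
  shows "(\<integral> \<theta>. h \<theta> \<partial>rbeta a b) = (\<integral> y. bdens a b y * h (y/2) \<partial>lborel)"
  unfolding rbeta_def beta_measure_eq
  using assms by (subst integral_distr) (auto simp: integral_density bdens_nonneg)

lemma pos_not_nonpos_Int: "0 < (x::real) \<Longrightarrow> x \<notin> \<int>\<^sub>\<le>\<^sub>0"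
  by (auto dest: nonpos_Ints_nonpos)

lemma Beta_ratio_plus1:
  fixes x y :: real
  assumes "0 < x" "0 < y"
  shows "Beta (x + 1) y / Beta x y = x / (x + y)"
proof -
  have "(x + y) * Beta (x + 1) y = x * Beta x y"
    by (rule Beta_plus1_left) (use assms pos_not_nonpos_Int in auto)
  moreover have "Beta x y > 0" using Beta_pos assms by auto
  ultimately show ?thesis using assms by (simp add: field_simps)
qed

lemma bdens_nz: "bdens a b y \<noteq> 0 \<Longrightarrow> 0 < y \<and> y < 1"
  unfolding bdens_def by (auto simp: indicator_def split: if_splits)

lemma beta_mom:
  fixes a b e :: real
  assumes "0 < a" "0 < b" "0 < a + e"
  shows "has_bochner_integral lborel (\<lambda>x. bdens a b x * x powr e) (Beta (a + e) b / Beta a b)"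
  by (rule beta_moment[OF assms])

context
  fixes a b :: real
  assumes a2: "2 < a" and b0: "0 < b"
begin

lemma M0: "Beta (a + 0) b / Beta a b = 1"
  using Beta_pos[of a b] a2 b0 by simp

lemma M1: "Beta (a + 1) b / Beta a b = a / (a + b)"
  using Beta_ratio_plus1[of a b] a2 b0 by simp

lemma M2: "Beta (a + 2) b / Beta a b = a * (a + 1) / ((a + b) * (a + b + 1))"
proof -
  have "Beta (a + 2) b / Beta a b = (Beta ((a + 1) + 1) b / Beta (a + 1) b) * (Beta (a + 1) b / Beta a b)"
    using Beta_pos[of "a+1" b] a2 b0 by (simp add: add.assoc)
  also have "\<dots> = (a + 1) / (a + 1 + b) * (a / (a + b))"
    using Beta_ratio_plus1[of "a+1" b] Beta_ratio_plus1[of a b] a2 b0 by simp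
  finally show ?thesis using a2 b0 by (simp add: field_simps)
qed

lemma Mm1: "Beta (a + -1) b / Beta a b = (a + b - 1) / (a - 1)"
proof -
  have "Beta ((a - 1) + 1) b / Beta (a - 1) b = (a - 1) / (a - 1 + b)"
    using Beta_ratio_plus1[of "a-1" b] a2 b0 by simp
  moreover have "Beta (a - 1) b > 0" "Beta a b > 0" using Beta_pos a2 b0 by auto
  ultimately show ?thesis using a2 b0 by (simp add: field_simps)
qed

lemma Mm2: "Beta (a + -2) b / Beta a b = (a + b - 1) * (a + b - 2) / ((a - 1) * (a - 2))"
proof -
  have 1: "Beta ((a - 1) + 1) b / Beta (a - 1) b = (a - 1) / (a - 1 + b)"
    using Beta_ratio_plus1[of "a-1" b] a2 b0 by simp
  have 2: "Beta ((a - 2) + 1) b / Beta (a - 2) b = (a - 2) / (a - 2 + b)"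
    using Beta_ratio_plus1[of "a-2" b] a2 b0 by simp
  have "Beta (a - 1) b > 0" "Beta a b > 0" "Beta (a - 2) b > 0" using Beta_pos a2 b0 by auto
  with 1 have e1: "Beta (a - 1) b = Beta a b * (a + b - 1) / (a - 1)" using a2 b0 by (simp add: field_simps)
  from 2 \<open>Beta (a - 2) b > 0\<close> have e2: "Beta (a - 2) b = Beta (a - 1) b * (a + b - 2) / (a - 2)"
    using a2 b0 by (simp add: field_simps)
  have "Beta (a + -2) b / Beta a b = (Beta a b * (a + b - 1) / (a - 1)) * (a + b - 2) / (a - 2) / Beta a b"
    using e1 e2 by simp
  also have "\<dots> = (a + b - 1) * (a + b - 2) / ((a - 1) * (a - 2))"
    using \<open>Beta a b > 0\<close> by simp
  finally show ?thesis .
qed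

lemma I0: "has_bochner_integral lborel (\<lambda>x. bdens a b x * x powr 0) 1"
  using beta_mom[of a b 0] M0 a2 b0 by simp
lemma I1: "has_bochner_integral lborel (\<lambda>x. bdens a b x * x powr 1) (a / (a + b))"
  using beta_mom[of a b 1] M1 a2 b0 by simp
lemma I2: "has_bochner_integral lborel (\<lambda>x. bdens a b x * x powr 2) (a * (a + 1) / ((a + b) * (a + b + 1)))"
  using beta_mom[of a b 2] M2 a2 b0 by simp
lemma Im1: "has_bochner_integral lborel (\<lambda>x. bdens a b x * x powr -1) ((a + b - 1) / (a - 1))"
  using beta_mom[of a b "-1"] Mm1 a2 b0 by simp
lemma Im2: "has_bochner_integral lborel (\<lambda>x. bdens a b x * x powr -2) ((a + b - 1) * (a + b - 2) / ((a - 1) * (a - 2)))"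
  using beta_mom[of a b "-2"] Mm2 a2 b0 by simp

end

lemma powr_facts:
  fixes y :: real assumes "0 < y"
  shows "y powr 0 = 1" "y powr 1 = y" "y powr 2 = y^2" "y powr -1 = 1/y" "y powr -2 = 1/y^2"
proof -
  show "y powr 0 = 1" "y powr 1 = y" using assms by auto
  show 2: "y powr 2 = y^2" using powr_realpow[of y 2] assms by simp
  show "y powr -1 = 1/y" using powr_neg_one assms by simp
  show "y powr -2 = 1/y^2" using 2 powr_minus[of y 2] by (simp add: divide_inverse)
qed

context
  fixes a b :: real
  assumes a2: "2 < a" and b0: "0 < b"
begin

lemma E_lin:
  "has_bochner_integral lborel (\<lambda>y. bdens a b y * (c0 + c1 * y)) (c0 + c1 * (a / (a + b)))"
proof -
  have "has_bochner_integral lborel (\<lambda>y. c0 * (bdens a b y * y powr 0) + c1 * (bdens a b y * y powr 1))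
     (c0 * 1 + c1 * (a / (a + b)))"
    using I0[OF a2 b0] I1[OF a2 b0] by (intro has_bochner_integral_add has_bochner_integral_mult_right) auto
  then show ?thesis
  proof (rule has_bochner_integral_cong[THEN iffD1, rotated -1])
    fix y :: real
    show "c0 * (bdens a b y * y powr 0) + c1 * (bdens a b y * y powr 1) = bdens a b y * (c0 + c1 * y)"
      using bdens_nz[of a b y] powr_facts[of y] by (cases "bdens a b y = 0") (auto simp: algebra_simps)
  qed auto
qed

lemma E_sq:
  "has_bochner_integral lborel (\<lambda>y. bdens a b y * ((y - m)^2 / y))
      (a / (a + b) - 2 * m + m^2 * ((a + b - 1) / (a - 1)))"
proof -
  have "has_bochner_integral lborel (\<lambda>y. (bdens a b y * y powr 1 - (2 * m) * (bdens a b y * y powr 0)) + m^2 * (bdens a b y * y powr -1))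
     ((a / (a + b) - (2 * m) * 1) + m^2 * ((a + b - 1) / (a - 1)))"
    using I0[OF a2 b0] I1[OF a2 b0] Im1[OF a2 b0]
    by (intro has_bochner_integral_add has_bochner_integral_diff has_bochner_integral_mult_right) auto
  then show ?thesis
  proof (rule has_bochner_integral_cong[THEN iffD1, rotated -1])
    fix y :: real
    show "(bdens a b y * y powr 1 - (2 * m) * (bdens a b y * y powr 0)) + m^2 * (bdens a b y * y powr -1) = bdens a b y * ((y - m)^2 / y)"
    proof (cases "bdens a b y = 0")
      case False
      then have y: "0 < y" using bdens_nz by auto
      show ?thesis unfolding powr_facts[OF y] using y by (simp add: field_simps power2_eq_square)
    qed simp
  qed auto
qed

lemma E_four:
  "has_bochner_integral lborel (\<lambda>y. bdens a b y * ((y - m)^4 / y^2))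
      (a * (a + 1) / ((a + b) * (a + b + 1)) - 4 * m * (a / (a + b)) + 6 * m^2
         - 4 * m^3 * ((a + b - 1) / (a - 1)) + m^4 * ((a + b - 1) * (a + b - 2) / ((a - 1) * (a - 2))))"
proof -
  have "has_bochner_integral lborel (\<lambda>y. (((bdens a b y * y powr 2 - (4 * m) * (bdens a b y * y powr 1))
        + (6 * m^2) * (bdens a b y * y powr 0)) - (4 * m^3) * (bdens a b y * y powr -1)) + m^4 * (bdens a b y * y powr -2))
     ((((a * (a + 1) / ((a + b) * (a + b + 1)) - (4 * m) * (a / (a + b))) + (6 * m^2) * 1)
       - (4 * m^3) * ((a + b - 1) / (a - 1))) + m^4 * ((a + b - 1) * (a + b - 2) / ((a - 1) * (a - 2))))"
    using I0[OF a2 b0] I1[OF a2 b0] I2[OF a2 b0] Im1[OF a2 b0] Im2[OF a2 b0]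
    by (intro has_bochner_integral_add has_bochner_integral_diff has_bochner_integral_mult_right) auto
  then show ?thesis
  proof (rule has_bochner_integral_cong[THEN iffD1, rotated -1])
    fix y :: real
    show "(((bdens a b y * y powr 2 - (4 * m) * (bdens a b y * y powr 1))
        + (6 * m^2) * (bdens a b y * y powr 0)) - (4 * m^3) * (bdens a b y * y powr -1)) + m^4 * (bdens a b y * y powr -2)
      = bdens a b y * ((y - m)^4 / y^2)"
    proof (cases "bdens a b y = 0")
      case False
      then have y: "0 < y" using bdens_nz by auto
      show ?thesis unfolding powr_facts[OF y] using y by (simp add: field_simps power2_eq_square power4_eq_xxxx power3_eq_cube)
    qed simp
  qed auto
qed

end

lemma n_pos: "0 < (m::real) \<Longrightarrow> 2 < m * n \<Longrightarrow> 0 < n"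
  by (metis zero_less_mult_iff dual_order.strict_trans zero_less_numeral less_asym)

lemma V2_eq:
  fixes m n :: real
  assumes "0 < m" "m < 1" "2 < m * n"
  shows "(m*n) / (m*n + (1-m)*n) - 2 * m + m^2 * ((m*n + (1-m)*n - 1) / (m*n - 1)) = m * (1 - m) / (m * n - 1)"
proof -
  have n: "0 < n" using n_pos assms by blast
  have e: "m*n + (1-m)*n = n" by (simp add: algebra_simps)
  have "m*n - 1 \<noteq> 0" using assms by simp
  then show ?thesis unfolding e using assms n by (simp add: field_simps power2_eq_square)
qed

lemma cancel_aux: "(Y::real) \<noteq> 0 \<Longrightarrow> c * (X / Y) * (K * Y) = c * X * K"
  by simp

lemma eq_div_aux: "(D::real) \<noteq> 0 \<Longrightarrow> x * D = y \<Longrightarrow> x = y / D"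
  by (simp add: field_simps)

lemma V2_bound:
  fixes m n :: real
  assumes "0 < m" "m < 1" "2 < m * n"
  shows "m * (1 - m) / (m * n - 1) \<le> 2 / n"
proof -
  have n: "0 < n" using n_pos assms by blast
  have "m * (1 - m) * n \<le> m * n" using assms n by (simp add: mult_le_cancel_right1 algebra_simps)
  also have "\<dots> \<le> 2 * (m * n - 1)" using assms by simp
  finally have "m * (1 - m) * n \<le> 2 * (m * n - 1)" .
  then show ?thesis using assms n by (simp add: field_simps)
qed

lemma V4_eq:
  fixes m n :: real
  assumes "0 < m" "m < 1" "2 < m * n"
  shows "(m*n) * (m*n + 1) / ((m*n + (1-m)*n) * (m*n + (1-m)*n + 1)) - 4 * m * ((m*n) / (m*n + (1-m)*n)) + 6 * m^2
         - 4 * m^3 * ((m*n + (1-m)*n - 1) / (m*n - 1)) + m^4 * ((m*n + (1-m)*n - 1) * (m*n + (1-m)*n - 2) / ((m*n - 1) * (m*n - 2)))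
       = (2*m*(1 + 2*m - 4*m^2 + m^3) + 3*n*m^2*(1-m)^2) / ((n+1)*(m*n-1)*(m*n-2))"
proof -
  have n: "0 < n" using n_pos assms by blast
  have e: "m*n + (1-m)*n = n" by (simp add: algebra_simps)
  have p1: "m*n - 1 \<noteq> 0" and p2: "m*n - 2 \<noteq> 0" and p3: "n + 1 \<noteq> 0" and p4: "n \<noteq> 0" using assms n by auto
  define D where "D = (n+1)*(m*n-1)*(m*n-2)"
  have D: "D \<noteq> 0" using p1 p2 p3 unfolding D_def by simp
  have t1a: "(m*n) * (m*n + 1) / (n * (n + 1)) = m*(m*n+1)/(n+1)"
  proof -
    have "n * (n + 1) \<noteq> 0" using p3 p4 by simp
    then show ?thesis using p3 by (subst frac_eq_eq) (auto simp: algebra_simps)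
  qed
  have t1: "(m*n) * (m*n + 1) / (n * (n + 1)) * D = m*(m*n+1)*(m*n-1)*(m*n-2)"
    unfolding D_def t1a using p3 by simp
  have t2: "4 * m * ((m*n) / n) * D = 4*m^2*D" using p4 by (simp add: power2_eq_square)
  have Y4: "m*n - 1 \<noteq> 0" by (rule p1)
  have DY4: "D = ((n+1)*(m*n-2)) * (m*n-1)" unfolding D_def by (simp only: ac_simps)
  have t4: "4 * m^3 * ((n - 1) / (m*n - 1)) * D = 4*m^3*(n-1)*((n+1)*(m*n-2))"
    unfolding DY4 by (rule cancel_aux[OF Y4])
  have Y: "(m*n - 1) * (m*n - 2) \<noteq> 0" using p1 p2 by simp
  have DY: "D = (n+1) * ((m*n-1)*(m*n-2))" unfolding D_def by (simp only: mult.assoc)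
  have t5: "m^4 * ((n - 1) * (n - 2) / ((m*n - 1) * (m*n - 2))) * D = m^4*((n-1)*(n-2))*(n+1)"
    unfolding DY by (rule cancel_aux[OF Y])
  have "((m*n) * (m*n + 1) / (n * (n + 1)) - 4 * m * ((m*n) / n) + 6 * m^2
         - 4 * m^3 * ((n - 1) / (m*n - 1)) + m^4 * ((n - 1) * (n - 2) / ((m*n - 1) * (m*n - 2)))) * D
     = (m*n) * (m*n + 1) / (n * (n + 1)) * D - 4 * m * ((m*n) / n) * D + 6 * m^2 * D
         - 4 * m^3 * ((n - 1) / (m*n - 1)) * D + m^4 * ((n - 1) * (n - 2) / ((m*n - 1) * (m*n - 2))) * D"
    by (simp only: left_diff_distrib distrib_right)
  also have "\<dots> = m*(m*n+1)*(m*n-1)*(m*n-2) - 4*m^2*D + 6*m^2*D - 4*m^3*(n-1)*((n+1)*(m*n-2)) + m^4*((n-1)*(n-2))*(n+1)"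
    by (simp only: t1 t2 t4 t5)
  also have "\<dots> = 2*m*(1 + 2*m - 4*m^2 + m^3) + 3*n*m^2*(1-m)^2"
    unfolding D_def by algebra
  finally have "((m*n) * (m*n + 1) / (n * (n + 1)) - 4 * m * ((m*n) / n) + 6 * m^2
         - 4 * m^3 * ((n - 1) / (m*n - 1)) + m^4 * ((n - 1) * (n - 2) / ((m*n - 1) * (m*n - 2))))
       = (2*m*(1 + 2*m - 4*m^2 + m^3) + 3*n*m^2*(1-m)^2) / D"
    by (rule eq_div_aux[OF D])
  then show ?thesis unfolding e D_def .
qed

lemma V4_bound:
  fixes m n :: real
  assumes "0 < m" "m < 1" "4 \<le> m * n"
  shows "(2*m*(1 + 2*m - 4*m^2 + m^3) + 3*n*m^2*(1-m)^2) / ((n+1)*(m*n-1)*(m*n-2)) \<le> 44 / (m^2 * n^2)"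
proof -
  have n: "0 < n" using n_pos assms by simp
  have "m*n \<le> 1*n" using assms n by (intro mult_right_mono) auto
  then have n1: "1 \<le> n" using assms by simp
  have m3: "m^3 \<le> 1" using assms by (simp add: power_le_one)
  have "0 \<le> m^2" by simp
  then have "1 + 2*m - 4*m^2 + m^3 \<le> 4" using m3 assms by linarith
  then have "2*m*(1 + 2*m - 4*m^2 + m^3) \<le> 2*m*4" using assms by (intro mult_left_mono) auto
  moreover have "2*m*4 \<le> (8::real)" using assms by simp
  ultimately have a1: "2*m*(1 + 2*m - 4*m^2 + m^3) \<le> 8" by (rule order_trans)
  have "m^2 \<le> 1" "(1-m)^2 \<le> 1" using assms by (auto simp: power_le_one)
  then have "m^2*(1-m)^2 \<le> 1" by (intro mult_le_one) auto
  then have "3*n*(m^2*(1-m)^2) \<le> 3*n*1" using n by (intro mult_left_mono) auto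
  then have a2: "3*n*m^2*(1-m)^2 \<le> 3*n" by (simp add: mult.assoc)
  have num: "2*m*(1 + 2*m - 4*m^2 + m^3) + 3*n*m^2*(1-m)^2 \<le> 11 * n" using a1 a2 n1 by linarith
  have d1: "m*n/2 \<le> m*n - 1" "m*n/2 \<le> m*n - 2" using assms by auto
  have "n * (m*n/2) * (m*n/2) \<le> (n+1)*(m*n-1)*(m*n-2)"
    using d1 n assms by (intro mult_mono) auto
  moreover have "n * (m*n/2) * (m*n/2) = m^2 * n^3 / 4" by (simp add: power2_eq_square power3_eq_cube)
  ultimately have den: "m^2 * n^3 / 4 \<le> (n+1)*(m*n-1)*(m*n-2)" by simp
  have pos: "0 < m^2 * n^3 / 4" using assms n by simp
  have "(2*m*(1 + 2*m - 4*m^2 + m^3) + 3*n*m^2*(1-m)^2) / ((n+1)*(m*n-1)*(m*n-2)) \<le> 11 * n / (m^2 * n^3 / 4)"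
    using num den pos n by (intro frac_le) auto
  also have "\<dots> = 44 / (m^2 * n^2)" using n assms by (simp add: field_simps power2_eq_square power3_eq_cube)
  finally show ?thesis .
qed

lemma nn_rbeta_eval:
  fixes h :: "real \<Rightarrow> real"
  assumes [measurable]: "h \<in> borel_measurable borel" and ab: "0 < a" "0 < b"
    and I: "has_bochner_integral lborel (\<lambda>y. bdens a b y * h y) I"
    and nn: "\<And>y. 0 < y \<Longrightarrow> y < 1 \<Longrightarrow> 0 \<le> h y"
  shows "(\<integral>\<^sup>+ \<theta>. ennreal (h (2 * \<theta>)) \<partial>rbeta a b) = ennreal I"
proof -
  have "(\<integral>\<^sup>+ \<theta>. ennreal (h (2 * \<theta>)) \<partial>rbeta a b) = (\<integral>\<^sup>+ y. ennreal (bdens a b y) * ennreal (h (2 * (y/2))) \<partial>lborel)"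
    by (rule nn_integral_rbeta) measurable
  also have "\<dots> = (\<integral>\<^sup>+ y. ennreal (bdens a b y * h y) \<partial>lborel)"
  proof (rule nn_integral_cong)
    fix y :: real
    show "ennreal (bdens a b y) * ennreal (h (2 * (y/2))) = ennreal (bdens a b y * h y)"
    proof (cases "bdens a b y = 0")
      case False
      then have "0 < y" "y < 1" using bdens_nz by auto
      then show ?thesis using nn[of y] bdens_nonneg[OF ab] by (simp add: ennreal_mult)
    qed simp
  qed
  also have "\<dots> = ennreal I"
  proof -
    have nn2: "0 \<le> bdens a b y * h y" for y
    proof (cases "bdens a b y = 0")
      case False
      then have "0 < y" "y < 1" using bdens_nz by auto
      then show ?thesis using nn[of y] bdens_nonneg[OF ab] by simp
    qed simp
    show ?thesis using I nn2
      by (subst nn_integral_eq_integral) (auto simp: has_bochner_integral_iff)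
  qed
  finally show ?thesis .
qed

lemma two_ln_le: fixes s :: real assumes "1 \<le> s" shows "2 * ln s \<le> s - 1/s"
proof -
  let ?f = "\<lambda>x::real. x - 1/x - 2 * ln x"
  have "?f 1 \<le> ?f s"
  proof (rule DERIV_nonneg_imp_nondecreasing[OF assms])
    fix x :: real assume x: "1 \<le> x" "x \<le> s"
    show "\<exists>y. DERIV ?f x :> y \<and> 0 \<le> y"
    proof (intro exI conjI)
      show "DERIV ?f x :> (1 + 1/x^2 - 2/x)"
        using x by (auto intro!: derivative_eq_intros simp: field_simps power2_eq_square)
      have "1 + 1/x^2 - 2/x = (1 - 1/x)^2" using x by (simp add: field_simps power2_eq_square)
      then show "0 \<le> 1 + 1/x^2 - 2/x" by simp
    qed
  qed
  then show ?thesis by simp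
qed

lemma ln_sq_le_ge1: fixes u :: real assumes "1 \<le> u" shows "(ln u)^2 \<le> (u - 1)^2 / u"
proof -
  define s where "s = sqrt u"
  have s: "1 \<le> s" "s^2 = u" "0 < s" using assms by (auto simp: s_def)
  have l: "ln u = 2 * ln s" using s by (metis ln_realpow less_numeral_extra(1) of_nat_numeral)
  have "0 \<le> 2 * ln s" using s by simp
  with two_ln_le[OF s(1)] have "(2 * ln s)^2 \<le> (s - 1/s)^2" by (intro power_mono) auto
  also have "(s - 1/s)^2 = (u - 1)^2 / u" using s by (simp add: field_simps power2_eq_square)
  finally show ?thesis using l by simp
qed

lemma sq_ratio: "0 < (p::real) \<Longrightarrow> 0 < q \<Longrightarrow> (q/p - 1)^2/(q/p) = (q - p)^2/(p*q)"
  by (simp add: field_simps power2_eq_square)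

lemma ln_sq_le: fixes u :: real assumes "0 < u" shows "(ln u)^2 \<le> (u - 1)^2 / u"
proof (cases "1 \<le> u")
  case True then show ?thesis by (rule ln_sq_le_ge1)
next
  case False
  then have "1 \<le> 1/u" using assms by simp
  from ln_sq_le_ge1[OF this] have "(ln (1/u))^2 \<le> (1/u - 1)^2 / (1/u)" .
  moreover have "(ln (1/u))^2 = (ln u)^2" using assms by (simp add: ln_div)
  moreover have "(1/u - 1)^2 / (1/u) = (u - 1)^2 / u" using assms by (simp add: field_simps power2_eq_square)
  ultimately show ?thesis by simp
qed

context
  fixes \<theta>0 \<theta> :: real
  assumes t0: "0 < \<theta>0" "\<theta>0 < 1/2" and t: "0 < \<theta>" "\<theta> < 1/2"
begin

definition "a0 = ln (\<theta>0 / \<theta>)"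
definition "c0 = ln ((1 - \<theta>0) / (1 - \<theta>))"
definition "kl = \<theta>0 * a0 + (1 - \<theta>0) * c0"
definition "w = \<theta>0 * a0^2 + (1 - \<theta>0) * c0^2"

lemma kl_nonneg: "0 \<le> kl"
proof -
  have "ln (\<theta> / \<theta>0) \<le> \<theta> / \<theta>0 - 1" using t t0 by (intro ln_le_minus_one) auto
  moreover have "ln ((1 - \<theta>) / (1 - \<theta>0)) \<le> (1 - \<theta>) / (1 - \<theta>0) - 1" using t t0 by (intro ln_le_minus_one) auto
  moreover have "a0 = - ln (\<theta> / \<theta>0)" "c0 = - ln ((1 - \<theta>) / (1 - \<theta>0))"
    using t t0 unfolding a0_def c0_def by (simp_all add: ln_div)
  ultimately have "1 - \<theta> / \<theta>0 \<le> a0" "1 - (1 - \<theta>) / (1 - \<theta>0) \<le> c0" by linarith+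
  then have "\<theta>0 * a0 \<ge> \<theta>0 * (1 - \<theta> / \<theta>0)" "(1 - \<theta>0) * c0 \<ge> (1 - \<theta>0) * (1 - (1 - \<theta>) / (1 - \<theta>0))"
    using t t0 by (auto intro!: mult_left_mono)
  moreover have "\<theta>0 * (1 - \<theta> / \<theta>0) + (1 - \<theta>0) * (1 - (1 - \<theta>) / (1 - \<theta>0)) = 0"
    using t t0 by (simp add: field_simps)
  ultimately show ?thesis unfolding kl_def by linarith
qed

lemma kl_le: "kl \<le> (2 * \<theta> - 2 * \<theta>0)^2 / (2 * \<theta>)"
proof -
  have "ln (\<theta>0 / \<theta>) \<le> \<theta>0 / \<theta> - 1" using t t0 by (intro ln_le_minus_one) auto
  moreover have "ln ((1 - \<theta>0) / (1 - \<theta>)) \<le> (1 - \<theta>0) / (1 - \<theta>) - 1" using t t0 by (intro ln_le_minus_one) auto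
  ultimately have "\<theta>0 * a0 \<le> \<theta>0 * (\<theta>0 / \<theta> - 1)" "(1 - \<theta>0) * c0 \<le> (1 - \<theta>0) * ((1 - \<theta>0) / (1 - \<theta>) - 1)"
    using t t0 unfolding a0_def c0_def by (auto intro!: mult_left_mono)
  then have "kl \<le> \<theta>0 * (\<theta>0 / \<theta> - 1) + (1 - \<theta>0) * ((1 - \<theta>0) / (1 - \<theta>) - 1)"
    unfolding kl_def by linarith
  also have "\<dots> = (\<theta> - \<theta>0)^2 / (\<theta> * (1 - \<theta>))"
    using t t0 by (simp add: field_simps power2_eq_square)
  also have "\<dots> \<le> (\<theta> - \<theta>0)^2 / (\<theta> * (1/2))"
    using t by (intro divide_left_mono mult_left_mono mult_pos_pos) auto
  also have "\<dots> = (2 * \<theta> - 2 * \<theta>0)^2 / (2 * \<theta>)"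
    using t by (simp add: field_simps power2_eq_square)
  finally show ?thesis .
qed

lemma w_le: "w \<le> 3/2 * ((2 * \<theta> - 2 * \<theta>0)^2 / (2 * \<theta>))"
proof -
  have "a0^2 \<le> (\<theta>0 / \<theta> - 1)^2 / (\<theta>0 / \<theta>)" unfolding a0_def using t t0 by (intro ln_sq_le) auto
  also have "\<dots> = (\<theta> - \<theta>0)^2 / (\<theta> * \<theta>0)" using t t0 sq_ratio[of \<theta> \<theta>0] by (simp add: power2_commute)
  finally have A: "\<theta>0 * a0^2 \<le> (\<theta> - \<theta>0)^2 / \<theta>"
    using t t0 by (simp add: field_simps)
  have "c0^2 \<le> ((1 - \<theta>0) / (1 - \<theta>) - 1)^2 / ((1 - \<theta>0) / (1 - \<theta>))" unfolding c0_def using t t0 by (intro ln_sq_le) auto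
  also have "\<dots> = (\<theta> - \<theta>0)^2 / ((1 - \<theta>) * (1 - \<theta>0))" using t t0 sq_ratio[of "1 - \<theta>" "1 - \<theta>0"] by (simp add: power2_commute)
  also have "\<dots> \<le> (\<theta> - \<theta>0)^2 / ((1/2) * (1/2))"
    using t t0 by (intro divide_left_mono mult_mono) auto
  also have "\<dots> \<le> 2 * (\<theta> - \<theta>0)^2 / \<theta>"
  proof -
    have "(2 * \<theta>) * (\<theta> - \<theta>0)^2 \<le> 1 * (\<theta> - \<theta>0)^2" using t by (intro mult_right_mono) auto
    then show ?thesis using t by (simp add: field_simps)
  qed
  finally have "(1 - \<theta>0) * c0^2 \<le> (1 - \<theta>0) * (2 * (\<theta> - \<theta>0)^2 / \<theta>)" using t0 by (intro mult_left_mono) auto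
  also have "\<dots> \<le> 2 * (\<theta> - \<theta>0)^2 / \<theta>" using t0 t by (intro mult_left_le_one_le) auto
  finally have "w \<le> 3 * (\<theta> - \<theta>0)^2 / \<theta>" using A unfolding w_def by simp
  also have "\<dots> = 3/2 * ((2 * \<theta> - 2 * \<theta>0)^2 / (2 * \<theta>))" using t by (simp add: field_simps power2_eq_square)
  finally show ?thesis .
qed

end

lemma integral_bind_pmf_bounded:
  fixes f :: "'b \<Rightarrow> real"
  assumes "\<And>x. \<bar>f x\<bar> \<le> B"
  shows "measure_pmf.expectation (bind_pmf M N) f = measure_pmf.expectation M (\<lambda>x. measure_pmf.expectation (N x) f)"
proof -
  have "integral\<^sup>L (measure_pmf M \<bind> (\<lambda>x. measure_pmf (N x))) f = \<integral>x. integral\<^sup>L (measure_pmf (N x)) f \<partial>measure_pmf M"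
    by (rule integral_bind[where K="count_space UNIV" and B=B and B'=1])
       (use assms in \<open>auto simp: measure_pmf.emeasure_space_1 measure_pmf_in_subprob_algebra intro: measure_pmf.finite_measure_axioms\<close>)
  then show ?thesis by (simp add: measure_pmf_bind)
qed

lemma integrable_pmf_bounded:
  fixes f :: "'b \<Rightarrow> real"
  assumes "\<And>x. \<bar>f x\<bar> \<le> B"
  shows "integrable (measure_pmf M) f"
  by (rule measure_pmf.integrable_const_bound[where B=B]) (use assms in auto)

definition Tpmf :: "real \<Rightarrow> nat \<Rightarrow> nat pmf" where
  "Tpmf \<theta> i = (if i = 0 then return_pmf 1 else map_pmf (\<lambda>b. if b then Suc i else i - 1) (bernoulli_pmf \<theta>))"

lemma pmf_Tpmf:
  assumes "0 \<le> \<theta>" "\<theta> \<le> 1"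
  shows "pmf (Tpmf \<theta> i) j = bd_trans \<theta> i j"
proof (cases "i = 0")
  case True then show ?thesis by (simp add: Tpmf_def bd_trans_def indicator_def)
next
  case False
  have "pmf (Tpmf \<theta> i) j = measure_pmf.prob (bernoulli_pmf \<theta>) ((\<lambda>b. if b then Suc i else i - 1) -` {j})"
    using False by (simp add: Tpmf_def pmf_map)
  also have "\<dots> = bd_trans \<theta> i j"
  proof -
    consider "j = Suc i" | "Suc j = i" | "j \<noteq> Suc i" "Suc j \<noteq> i" by blast
    then show ?thesis
    proof cases
      case 1
      then have "(\<lambda>b. if b then Suc i else i - 1) -` {j} = {True}" using False by (auto split: if_splits)
      then show ?thesis using 1 False assms by (simp add: measure_pmf_single bd_trans_def)
    next
      case 2
      then have "(\<lambda>b. if b then Suc i else i - 1) -` {j} = {False}" using False by (auto split: if_splits)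
      then show ?thesis using 2 False assms by (simp add: measure_pmf_single bd_trans_def)
    next
      case 3
      then have "(\<lambda>b. if b then Suc i else i - 1) -` {j} = {}" using False by (auto split: if_splits)
      then show ?thesis using 3 False assms by (simp add: bd_trans_def)
    qed
  qed
  finally show ?thesis .
qed

lemma integral_Tpmf:
  fixes g :: "nat \<Rightarrow> real"
  assumes "0 \<le> \<theta>" "\<theta> \<le> 1"
  shows "measure_pmf.expectation (Tpmf \<theta> i) g = (if i = 0 then g 1 else \<theta> * g (Suc i) + (1 - \<theta>) * g (i - 1))"
  using assms by (simp add: Tpmf_def algebra_simps)

primrec pd :: "nat pmf \<Rightarrow> real \<Rightarrow> nat \<Rightarrow> (nat \<Rightarrow> nat) pmf" where
  "pd Q \<theta> 0 = map_pmf (\<lambda>i. (\<lambda>_. undefined)(0 := i)) Q"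
| "pd Q \<theta> (Suc n) = bind_pmf (pd Q \<theta> n) (\<lambda>x. map_pmf (\<lambda>j. x(Suc n := j)) (Tpmf \<theta> (x n)))"

lemma chain_paths_iff: "x \<in> chain_paths n \<longleftrightarrow> (\<forall>k>n. x k = undefined)"
  unfolding chain_paths_def PiE_def extensional_def by auto

lemma set_pd: "x \<in> set_pmf (pd Q \<theta> n) \<Longrightarrow> x \<in> chain_paths n"
proof (induction n arbitrary: x)
  case 0 then show ?case by (auto simp: chain_paths_iff)
next
  case (Suc n)
  then obtain y j where "y \<in> set_pmf (pd Q \<theta> n)" "x = y(Suc n := j)" by auto
  with Suc.IH show ?case by (auto simp: chain_paths_iff)
qed

lemma path_pmf_Suc:
  "path_pmf q0 \<theta> (Suc n) y = path_pmf q0 \<theta> n y * bd_trans \<theta> (y n) (y (Suc n))"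
proof -
  have "{1..Suc n} = insert (Suc n) {1..n}" by auto
  then show ?thesis unfolding path_pmf_def by (simp add: mult.assoc)
qed

lemma path_pmf_cong:
  assumes "\<And>k. k \<le> n \<Longrightarrow> x k = y k"
  shows "path_pmf q0 \<theta> n x = path_pmf q0 \<theta> n y"
  unfolding path_pmf_def using assms by (auto intro!: prod.cong)

lemma pmf_pd:
  assumes "0 \<le> \<theta>" "\<theta> \<le> 1"
  shows "pmf (pd Q \<theta> n) y = (if y \<in> chain_paths n then path_pmf (pmf Q) \<theta> n y else 0)"
proof (induction n arbitrary: y)
  case 0
  have inj: "inj (\<lambda>i::nat. ((\<lambda>_. undefined)(0 := i)) :: nat \<Rightarrow> nat)"
    by (rule injI) (metis fun_upd_same)
  show ?case
  proof (cases "y \<in> chain_paths 0")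
    case True
    then have "y = (\<lambda>_. undefined)(0 := y 0)" by (auto simp: chain_paths_iff)
    then have "pmf (pd Q \<theta> 0) y = pmf Q (y 0)"
      using pmf_map_inj'[OF inj, of Q "y 0"] by simp
    then show ?thesis using True by (simp add: path_pmf_def)
  next
    case False
    then have "y \<notin> (\<lambda>i. ((\<lambda>_. undefined)(0 := i))) ` set_pmf Q" by (auto simp: chain_paths_iff)
    then show ?thesis using False by (simp add: pmf_map_outside del: pmf_map)
  qed
next
  case (Suc n)
  define y' where "y' = y(Suc n := undefined)"
  have "pmf (pd Q \<theta> (Suc n)) y = (\<integral>x. pmf (map_pmf (\<lambda>j. x(Suc n := j)) (Tpmf \<theta> (x n))) y \<partial>pd Q \<theta> n)"
    by (simp add: pmf_bind)
  also have "\<dots> = (\<integral>x. indicator {y'} x * pmf (Tpmf \<theta> (y n)) (y (Suc n)) \<partial>pd Q \<theta> n)"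
  proof (rule integral_cong_AE)
    show "AE x in pd Q \<theta> n. pmf (map_pmf (\<lambda>j. x(Suc n := j)) (Tpmf \<theta> (x n))) y = indicator {y'} x * pmf (Tpmf \<theta> (y n)) (y (Suc n))"
    proof (rule AE_pmfI)
      fix x assume x: "x \<in> set_pmf (pd Q \<theta> n)"
      then have xc: "x \<in> chain_paths n" by (rule set_pd)
      have inj: "inj (\<lambda>j. x(Suc n := j))" by (rule injI) (metis fun_upd_same)
      show "pmf (map_pmf (\<lambda>j. x(Suc n := j)) (Tpmf \<theta> (x n))) y = indicator {y'} x * pmf (Tpmf \<theta> (y n)) (y (Suc n))"
      proof (cases "x = y'")
        case True
        then have "y = x(Suc n := y (Suc n))" using xc by (auto simp: y'_def)
        then have "pmf (map_pmf (\<lambda>j. x(Suc n := j)) (Tpmf \<theta> (x n))) y = pmf (Tpmf \<theta> (x n)) (y (Suc n))"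
          using pmf_map_inj'[OF inj, of "Tpmf \<theta> (x n)" "y (Suc n)"] by simp
        then show ?thesis using True by (simp add: y'_def)
      next
        case False
        have "y \<notin> (\<lambda>j. x(Suc n := j)) ` set_pmf (Tpmf \<theta> (x n))"
        proof
          assume "y \<in> (\<lambda>j. x(Suc n := j)) ` set_pmf (Tpmf \<theta> (x n))"
          then obtain j where "y = x(Suc n := j)" by auto
          then have "x = y'" using xc unfolding y'_def by (auto simp: chain_paths_iff fun_eq_iff)
          with False show False by simp
        qed
        then show ?thesis using False by (simp add: pmf_map_outside del: pmf_map)
      qed
    qed
  qed auto
  also have "\<dots> = pmf (pd Q \<theta> n) y' * pmf (Tpmf \<theta> (y n)) (y (Suc n))"
    by (simp add: measure_pmf_single)
  also have "\<dots> = (if y \<in> chain_paths (Suc n) then path_pmf (pmf Q) \<theta> (Suc n) y else 0)"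
  proof -
    have c: "y' \<in> chain_paths n \<longleftrightarrow> y \<in> chain_paths (Suc n)"
      unfolding chain_paths_iff y'_def by auto
    have "path_pmf (pmf Q) \<theta> n y' = path_pmf (pmf Q) \<theta> n y"
      by (rule path_pmf_cong) (auto simp: y'_def)
    then show ?thesis using c Suc.IH[of y'] assms
      by (simp add: path_pmf_Suc pmf_Tpmf)
  qed
  finally show ?case .
qed

definition zz :: "real \<Rightarrow> real \<Rightarrow> nat \<Rightarrow> nat \<Rightarrow> real" where
  "zz \<theta>0 \<theta> i j = (if i = 0 then 0 else if j = Suc i then ln (\<theta>0 / \<theta>) else ln ((1 - \<theta>0) / (1 - \<theta>)))"

definition rr :: "real \<Rightarrow> real \<Rightarrow> nat \<Rightarrow> (nat \<Rightarrow> nat) \<Rightarrow> real" where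
  "rr \<theta>0 \<theta> n x = (\<Sum>i\<in>{1..n}. zz \<theta>0 \<theta> (x (i - 1)) (x i))"

definition KK :: "real \<Rightarrow> real \<Rightarrow> real" where
  "KK \<theta>0 \<theta> = \<bar>ln (\<theta>0 / \<theta>)\<bar> + \<bar>ln ((1 - \<theta>0) / (1 - \<theta>))\<bar>"

lemma zz_bound: "\<bar>zz \<theta>0 \<theta> i j\<bar> \<le> KK \<theta>0 \<theta>"
  unfolding zz_def KK_def by auto

lemma rr_bound: "\<bar>rr \<theta>0 \<theta> n x\<bar> \<le> real n * KK \<theta>0 \<theta>"
proof -
  have "\<bar>rr \<theta>0 \<theta> n x\<bar> \<le> (\<Sum>i\<in>{1..n}. \<bar>zz \<theta>0 \<theta> (x (i - 1)) (x i)\<bar>)"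
    unfolding rr_def by (rule sum_abs)
  also have "\<dots> \<le> (\<Sum>i\<in>{1..n}. KK \<theta>0 \<theta>)" by (intro sum_mono zz_bound)
  finally show ?thesis by simp
qed

lemma rr_sq_bound: "\<bar>(rr \<theta>0 \<theta> n x)^2\<bar> \<le> (real n * KK \<theta>0 \<theta>)^2"
  using power_mono[OF rr_bound[of \<theta>0 \<theta> n x], of 2] by simp

lemma rr_0[simp]: "rr \<theta>0 \<theta> 0 x = 0"
  unfolding rr_def by simp

lemma rr_Suc: "rr \<theta>0 \<theta> (Suc n) (x(Suc n := j)) = rr \<theta>0 \<theta> n x + zz \<theta>0 \<theta> (x n) j"
proof -
  have "{1..Suc n} = insert (Suc n) {1..n}" by auto
  then have "rr \<theta>0 \<theta> (Suc n) (x(Suc n := j)) = (\<Sum>i\<in>{1..n}. zz \<theta>0 \<theta> ((x(Suc n := j)) (i - 1)) ((x(Suc n := j)) i)) + zz \<theta>0 \<theta> (x n) j"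
    unfolding rr_def by simp
  also have "(\<Sum>i\<in>{1..n}. zz \<theta>0 \<theta> ((x(Suc n := j)) (i - 1)) ((x(Suc n := j)) i)) = rr \<theta>0 \<theta> n x"
    unfolding rr_def by (intro sum.cong) auto
  finally show ?thesis .
qed

lemma E_step:
  fixes F :: "(nat \<Rightarrow> nat) \<Rightarrow> real"
  assumes "\<And>x. \<bar>F x\<bar> \<le> B"
  shows "measure_pmf.expectation (pd Q \<theta> (Suc n)) F =
     measure_pmf.expectation (pd Q \<theta> n) (\<lambda>x. measure_pmf.expectation (Tpmf \<theta> (x n)) (\<lambda>j. F (x(Suc n := j))))"
  by (subst pd.simps, subst integral_bind_pmf_bounded[OF assms]) simp

context
  fixes \<theta>0 \<theta> :: real
  assumes t0: "0 < \<theta>0" "\<theta>0 < 1/2" and t: "0 < \<theta>" "\<theta> < 1/2"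
begin

lemma inner1: "measure_pmf.expectation (Tpmf \<theta>0 i) (\<lambda>j. r + zz \<theta>0 \<theta> i j) = r + (if i = 0 then 0 else kl \<theta>0 \<theta>)"
  using t0 by (cases i) (simp_all add: integral_Tpmf zz_def kl_def[OF t0 t] a0_def[OF t0 t] c0_def[OF t0 t] algebra_simps)

lemma inner2: "measure_pmf.expectation (Tpmf \<theta>0 i) (\<lambda>j. (r + zz \<theta>0 \<theta> i j)^2) =
    (if i = 0 then r^2 else r^2 + 2 * r * kl \<theta>0 \<theta> + w \<theta>0 \<theta>)"
  using t0 by (cases i) (simp_all add: integral_Tpmf zz_def kl_def[OF t0 t] w_def[OF t0 t] a0_def[OF t0 t] c0_def[OF t0 t] algebra_simps power2_eq_square)

lemma w_nonneg: "0 \<le> w \<theta>0 \<theta>"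
  using t0 unfolding w_def[OF t0 t] by (intro add_nonneg_nonneg mult_nonneg_nonneg) auto

lemma E_rr: "measure_pmf.expectation (pd Q \<theta>0 n) (rr \<theta>0 \<theta> n) \<le> real n * kl \<theta>0 \<theta>"
proof (induction n)
  case 0 then show ?case by simp
next
  case (Suc n)
  have "measure_pmf.expectation (pd Q \<theta>0 (Suc n)) (rr \<theta>0 \<theta> (Suc n)) =
      measure_pmf.expectation (pd Q \<theta>0 n) (\<lambda>x. measure_pmf.expectation (Tpmf \<theta>0 (x n)) (\<lambda>j. rr \<theta>0 \<theta> (Suc n) (x(Suc n := j))))"
    by (rule E_step[OF rr_bound])
  also have "\<dots> = measure_pmf.expectation (pd Q \<theta>0 n) (\<lambda>x. rr \<theta>0 \<theta> n x + (if x n = 0 then 0 else kl \<theta>0 \<theta>))"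
    by (simp add: rr_Suc inner1)
  also have "\<dots> = measure_pmf.expectation (pd Q \<theta>0 n) (rr \<theta>0 \<theta> n) + measure_pmf.expectation (pd Q \<theta>0 n) (\<lambda>x. if x n = 0 then 0 else kl \<theta>0 \<theta>)"
    by (rule Bochner_Integration.integral_add[OF integrable_pmf_bounded[OF rr_bound] integrable_pmf_bounded[where B="\<bar>kl \<theta>0 \<theta>\<bar>"]]) auto
  also have "measure_pmf.expectation (pd Q \<theta>0 n) (\<lambda>x. if x n = 0 then 0 else kl \<theta>0 \<theta>) \<le> measure_pmf.expectation (pd Q \<theta>0 n) (\<lambda>x. kl \<theta>0 \<theta>)"
    using kl_nonneg[OF t0 t]
    by (intro integral_mono) (auto intro!: integrable_pmf_bounded[where B="\<bar>kl \<theta>0 \<theta>\<bar>"])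
  also have "measure_pmf.expectation (pd Q \<theta>0 n) (\<lambda>x. kl \<theta>0 \<theta>) = kl \<theta>0 \<theta>" by simp
  finally show ?case using Suc.IH by (simp add: algebra_simps)
qed


end

context
  fixes \<theta>0 \<theta> :: real
  assumes t0: "0 < \<theta>0" "\<theta>0 < 1/2" and t: "0 < \<theta>" "\<theta> < 1/2"
begin

lemma E_rr2:
  assumes N: "0 < N"
  shows "measure_pmf.expectation (pd Q \<theta>0 n) (\<lambda>x. (rr \<theta>0 \<theta> n x)^2) \<le> (1 + 1/N)^n * (real n * (N * (kl \<theta>0 \<theta>)^2 + w \<theta>0 \<theta>))"
proof (induction n)
  case 0 then show ?case by simp
next
  case (Suc n)
  let ?c = "N * (kl \<theta>0 \<theta>)^2 + w \<theta>0 \<theta>"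
  have c0: "0 \<le> ?c" using N w_nonneg[OF t0 t] by simp
  have "measure_pmf.expectation (pd Q \<theta>0 (Suc n)) (\<lambda>x. (rr \<theta>0 \<theta> (Suc n) x)^2) =
      measure_pmf.expectation (pd Q \<theta>0 n) (\<lambda>x. measure_pmf.expectation (Tpmf \<theta>0 (x n)) (\<lambda>j. (rr \<theta>0 \<theta> (Suc n) (x(Suc n := j)))^2))"
    by (rule E_step[OF rr_sq_bound])
  also have "\<dots> = measure_pmf.expectation (pd Q \<theta>0 n) (\<lambda>x. if x n = 0 then (rr \<theta>0 \<theta> n x)^2 else (rr \<theta>0 \<theta> n x)^2 + 2 * rr \<theta>0 \<theta> n x * kl \<theta>0 \<theta> + w \<theta>0 \<theta>)"
    by (simp add: rr_Suc inner2[OF t0 t])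
  also have "\<dots> \<le> measure_pmf.expectation (pd Q \<theta>0 n) (\<lambda>x. (1 + 1/N) * (rr \<theta>0 \<theta> n x)^2 + ?c)"
  proof (rule integral_mono)
    show "integrable (measure_pmf (pd Q \<theta>0 n)) (\<lambda>x. if x n = 0 then (rr \<theta>0 \<theta> n x)^2 else (rr \<theta>0 \<theta> n x)^2 + 2 * rr \<theta>0 \<theta> n x * kl \<theta>0 \<theta> + w \<theta>0 \<theta>)"
    proof (rule integrable_pmf_bounded)
      fix x
      have b: "\<bar>rr \<theta>0 \<theta> n x\<bar> \<le> real n * KK \<theta>0 \<theta>" by (rule rr_bound)
      have "\<bar>(rr \<theta>0 \<theta> n x)^2\<bar> \<le> (real n * KK \<theta>0 \<theta>)^2" by (rule rr_sq_bound)
      moreover have "\<bar>2 * rr \<theta>0 \<theta> n x * kl \<theta>0 \<theta>\<bar> \<le> 2 * (real n * KK \<theta>0 \<theta>) * \<bar>kl \<theta>0 \<theta>\<bar>"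
        using b by (simp add: abs_mult mult_right_mono)
      moreover have "0 \<le> \<bar>w \<theta>0 \<theta>\<bar>" "0 \<le> 2 * (real n * KK \<theta>0 \<theta>) * \<bar>kl \<theta>0 \<theta>\<bar>"
        using b by auto
      moreover have "\<bar>(rr \<theta>0 \<theta> n x)^2 + 2 * rr \<theta>0 \<theta> n x * kl \<theta>0 \<theta> + w \<theta>0 \<theta>\<bar>
          \<le> \<bar>(rr \<theta>0 \<theta> n x)^2\<bar> + \<bar>2 * rr \<theta>0 \<theta> n x * kl \<theta>0 \<theta>\<bar> + \<bar>w \<theta>0 \<theta>\<bar>"
        by (rule order_trans[OF abs_triangle_ineq add_right_mono[OF abs_triangle_ineq]])
      ultimately show "\<bar>if x n = 0 then (rr \<theta>0 \<theta> n x)^2 else (rr \<theta>0 \<theta> n x)^2 + 2 * rr \<theta>0 \<theta> n x * kl \<theta>0 \<theta> + w \<theta>0 \<theta>\<bar>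
          \<le> (real n * KK \<theta>0 \<theta>)^2 + 2 * (real n * KK \<theta>0 \<theta>) * \<bar>kl \<theta>0 \<theta>\<bar> + \<bar>w \<theta>0 \<theta>\<bar>"
      proof -
        assume h: "\<bar>(rr \<theta>0 \<theta> n x)^2\<bar> \<le> (real n * KK \<theta>0 \<theta>)^2"
           "\<bar>2 * rr \<theta>0 \<theta> n x * kl \<theta>0 \<theta>\<bar> \<le> 2 * (real n * KK \<theta>0 \<theta>) * \<bar>kl \<theta>0 \<theta>\<bar>"
           "0 \<le> \<bar>w \<theta>0 \<theta>\<bar>" "0 \<le> 2 * (real n * KK \<theta>0 \<theta>) * \<bar>kl \<theta>0 \<theta>\<bar>"
           "\<bar>(rr \<theta>0 \<theta> n x)^2 + 2 * rr \<theta>0 \<theta> n x * kl \<theta>0 \<theta> + w \<theta>0 \<theta>\<bar>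
          \<le> \<bar>(rr \<theta>0 \<theta> n x)^2\<bar> + \<bar>2 * rr \<theta>0 \<theta> n x * kl \<theta>0 \<theta>\<bar> + \<bar>w \<theta>0 \<theta>\<bar>"
        have A: "\<bar>(rr \<theta>0 \<theta> n x)^2\<bar> \<le> (real n * KK \<theta>0 \<theta>)^2 + 2 * (real n * KK \<theta>0 \<theta>) * \<bar>kl \<theta>0 \<theta>\<bar> + \<bar>w \<theta>0 \<theta>\<bar>"
          using h by linarith
        have B: "\<bar>(rr \<theta>0 \<theta> n x)^2 + 2 * rr \<theta>0 \<theta> n x * kl \<theta>0 \<theta> + w \<theta>0 \<theta>\<bar> \<le> (real n * KK \<theta>0 \<theta>)^2 + 2 * (real n * KK \<theta>0 \<theta>) * \<bar>kl \<theta>0 \<theta>\<bar> + \<bar>w \<theta>0 \<theta>\<bar>"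
          using h by linarith
        show ?thesis using A B by simp
      qed
    qed
    show "integrable (measure_pmf (pd Q \<theta>0 n)) (\<lambda>x. (1 + 1/N) * (rr \<theta>0 \<theta> n x)^2 + ?c)"
      by (rule Bochner_Integration.integrable_add[OF integrable_mult_right[OF integrable_pmf_bounded[OF rr_sq_bound]] measure_pmf.integrable_const])
    fix x
    let ?r = "rr \<theta>0 \<theta> n x"
    have amgm: "2 * ?r * kl \<theta>0 \<theta> \<le> ?r^2 / N + N * (kl \<theta>0 \<theta>)^2"
    proof -
      have "0 \<le> (?r / N - kl \<theta>0 \<theta>)^2 * N" using N by simp
      also have "(?r / N - kl \<theta>0 \<theta>)^2 * N = ?r^2 / N + N * (kl \<theta>0 \<theta>)^2 - 2 * ?r * kl \<theta>0 \<theta>"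
        using N by (simp add: field_simps power2_eq_square)
      finally show ?thesis by simp
    qed
    have "0 \<le> ?r^2 / N" using N by simp
    moreover have "0 \<le> (kl \<theta>0 \<theta>)^2" "0 \<le> w \<theta>0 \<theta>" using w_nonneg[OF t0 t] by auto
    moreover have "(1 + 1/N) * ?r^2 = ?r^2 + ?r^2 / N" by (simp add: algebra_simps)
    moreover have "0 \<le> N * (kl \<theta>0 \<theta>)^2" using N by simp
    ultimately show "(if x n = 0 then ?r^2 else ?r^2 + 2 * ?r * kl \<theta>0 \<theta> + w \<theta>0 \<theta>) \<le> (1 + 1/N) * ?r^2 + ?c"
    proof -
      assume h: "0 \<le> ?r^2 / N" "0 \<le> (kl \<theta>0 \<theta>)^2" "0 \<le> w \<theta>0 \<theta>" "(1 + 1/N) * ?r^2 = ?r^2 + ?r^2 / N" "0 \<le> N * (kl \<theta>0 \<theta>)^2"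
      have A: "?r^2 \<le> (1 + 1/N) * ?r^2 + ?c" using h by linarith
      have B: "?r^2 + 2 * ?r * kl \<theta>0 \<theta> + w \<theta>0 \<theta> \<le> (1 + 1/N) * ?r^2 + ?c" using h amgm by linarith
      show ?thesis using A B by simp
    qed
  qed
  also have "\<dots> = (1 + 1/N) * measure_pmf.expectation (pd Q \<theta>0 n) (\<lambda>x. (rr \<theta>0 \<theta> n x)^2) + ?c"
    by (subst Bochner_Integration.integral_add[OF integrable_mult_right[OF integrable_pmf_bounded[OF rr_sq_bound]] measure_pmf.integrable_const]) simp
  also have "\<dots> \<le> (1 + 1/N) * ((1 + 1/N)^n * (real n * ?c)) + ?c"
    using Suc.IH N by (intro add_right_mono mult_left_mono) auto
  also have "\<dots> \<le> (1 + 1/N)^(Suc n) * (real (Suc n) * ?c)"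
  proof -
    have "1 \<le> (1 + 1/N)^(Suc n)" using N by (intro one_le_power) auto
    then have "?c \<le> (1 + 1/N)^(Suc n) * ?c" using c0 by (simp add: mult_le_cancel_right1)
    then show ?thesis by (simp add: algebra_simps)
  qed
  finally show ?case .
qed

end

lemma bd_trans_nonneg: "0 \<le> \<theta> \<Longrightarrow> \<theta> \<le> 1 \<Longrightarrow> 0 \<le> bd_trans \<theta> i j"
  unfolding bd_trans_def by auto

lemma path_pmf_nonneg: "0 \<le> \<theta> \<Longrightarrow> \<theta> \<le> 1 \<Longrightarrow> 0 \<le> path_pmf (pmf Q) \<theta> n x"
  unfolding path_pmf_def by (intro mult_nonneg_nonneg prod_nonneg bd_trans_nonneg) auto

lemma countable_chain_paths: "countable (chain_paths n)"
  unfolding chain_paths_def by (intro countable_PiE) auto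

lemma integral_count_pd:
  fixes F :: "(nat \<Rightarrow> nat) \<Rightarrow> real"
  assumes "0 \<le> \<theta>" "\<theta> \<le> 1"
  shows "(\<integral>x. path_pmf (pmf Q) \<theta> n x * F x \<partial>count_space (chain_paths n)) = measure_pmf.expectation (pd Q \<theta> n) F"
proof -
  have "measure_pmf.expectation (pd Q \<theta> n) F = (\<integral>x. pmf (pd Q \<theta> n) x *\<^sub>R F x \<partial>count_space UNIV)"
    by (subst measure_pmf_eq_density, subst integral_density) auto
  also have "\<dots> = (\<integral>x. indicator (chain_paths n) x *\<^sub>R (path_pmf (pmf Q) \<theta> n x * F x) \<partial>count_space UNIV)"
    by (intro Bochner_Integration.integral_cong) (auto simp: pmf_pd[OF assms] indicator_def)
  also have "\<dots> = (\<integral>x. path_pmf (pmf Q) \<theta> n x * F x \<partial>restrict_space (count_space UNIV) (chain_paths n))"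
    by (subst integral_restrict_space) auto
  also have "\<dots> = (\<integral>x. path_pmf (pmf Q) \<theta> n x * F x \<partial>count_space (chain_paths n))"
    by (simp add: restrict_count_space)
  finally show ?thesis ..
qed

lemma integral_path_law:
  fixes F :: "(nat \<Rightarrow> nat) \<Rightarrow> real"
  assumes "0 \<le> \<theta>" "\<theta> \<le> 1"
  shows "(\<integral>x. F x \<partial>path_law (pmf Q) \<theta> n) = measure_pmf.expectation (pd Q \<theta> n) F"
  unfolding path_law_def
  by (subst integral_density) (auto simp: path_pmf_nonneg[OF assms] integral_count_pd[OF assms])

context
  fixes \<theta>0 \<theta> :: real
  assumes t0: "0 < \<theta>0" "\<theta>0 < 1/2" and t: "0 < \<theta>" "\<theta> < 1/2"
begin

lemma bd_trans_pos_iff: "0 < bd_trans \<theta>0 i j \<longleftrightarrow> 0 < bd_trans \<theta> i j"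
  using t0 t unfolding bd_trans_def by auto

lemma zz_eq: "0 < bd_trans \<theta>0 i j \<Longrightarrow> ln (bd_trans \<theta>0 i j / bd_trans \<theta> i j) = zz \<theta>0 \<theta> i j"
  unfolding bd_trans_def zz_def by (cases "i = 0"; cases "j = Suc i"; cases "Suc j = i") auto

lemma pp_pos:
  assumes "0 < path_pmf (pmf Q) \<theta>0 n x"
  shows "0 < pmf Q (x 0)" "\<And>i. i \<in> {1..n} \<Longrightarrow> 0 < bd_trans \<theta>0 (x (i - 1)) (x i)"
proof -
  have h: "0 < pmf Q (x 0) * (\<Prod>i\<in>{1..n}. bd_trans \<theta>0 (x (i - 1)) (x i))"
    using assms unfolding path_pmf_def .
  then have "pmf Q (x 0) * (\<Prod>i\<in>{1..n}. bd_trans \<theta>0 (x (i - 1)) (x i)) \<noteq> 0" by linarith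
  then have nz: "pmf Q (x 0) \<noteq> 0 \<and> (\<Prod>i\<in>{1..n}. bd_trans \<theta>0 (x (i - 1)) (x i)) \<noteq> 0"
    by (rule mult_not_zero)
  then show "0 < pmf Q (x 0)" using pmf_nonneg[of Q "x 0"] by linarith
  fix i assume i: "i \<in> {1..n}"
  have P: "(\<Prod>i\<in>{1..n}. bd_trans \<theta>0 (x (i - 1)) (x i)) \<noteq> 0" using nz by blast
  have "bd_trans \<theta>0 (x (i - 1)) (x i) \<noteq> 0"
  proof
    assume "bd_trans \<theta>0 (x (i - 1)) (x i) = 0"
    then have "(\<Prod>i\<in>{1..n}. bd_trans \<theta>0 (x (i - 1)) (x i)) = 0" using i by (intro prod_zero) auto
    with P show False by simp
  qed
  then show "0 < bd_trans \<theta>0 (x (i - 1)) (x i)" using bd_trans_nonneg[of \<theta>0 "x (i - 1)" "x i"] t0 by linarith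
qed

lemma ln_ratio_rr:
  assumes "0 < path_pmf (pmf Q) \<theta>0 n x"
  shows "ln (path_pmf (pmf Q) \<theta>0 n x / path_pmf (pmf Q) \<theta> n x) = rr \<theta>0 \<theta> n x"
proof -
  note p = pp_pos[OF assms]
  have p': "\<And>i. i \<in> {1..n} \<Longrightarrow> 0 < bd_trans \<theta> (x (i - 1)) (x i)" using p(2) bd_trans_pos_iff by blast
  have "path_pmf (pmf Q) \<theta>0 n x / path_pmf (pmf Q) \<theta> n x =
      (\<Prod>i\<in>{1..n}. bd_trans \<theta>0 (x (i - 1)) (x i)) / (\<Prod>i\<in>{1..n}. bd_trans \<theta> (x (i - 1)) (x i))"
    unfolding path_pmf_def using p(1) by simp
  also have "\<dots> = (\<Prod>i\<in>{1..n}. bd_trans \<theta>0 (x (i - 1)) (x i) / bd_trans \<theta> (x (i - 1)) (x i))"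
    by (rule prod_dividef[symmetric])
  finally have eq: "path_pmf (pmf Q) \<theta>0 n x / path_pmf (pmf Q) \<theta> n x = (\<Prod>i\<in>{1..n}. bd_trans \<theta>0 (x (i - 1)) (x i) / bd_trans \<theta> (x (i - 1)) (x i))" .
  have "ln (\<Prod>i\<in>{1..n}. bd_trans \<theta>0 (x (i - 1)) (x i) / bd_trans \<theta> (x (i - 1)) (x i)) = (\<Sum>i\<in>{1..n}. ln (bd_trans \<theta>0 (x (i - 1)) (x i) / bd_trans \<theta> (x (i - 1)) (x i)))"
  proof (rule ln_prod)
    fix i assume "i \<in> {1..n}"
    then show "bd_trans \<theta>0 (x (i - 1)) (x i) / bd_trans \<theta> (x (i - 1)) (x i) \<noteq> 0"
      using p(2)[of i] p'[of i] by simp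
  qed simp
  then have "ln (path_pmf (pmf Q) \<theta>0 n x / path_pmf (pmf Q) \<theta> n x) = (\<Sum>i\<in>{1..n}. ln (bd_trans \<theta>0 (x (i - 1)) (x i) / bd_trans \<theta> (x (i - 1)) (x i)))"
    using eq by simp
  also have "\<dots> = rr \<theta>0 \<theta> n x" unfolding rr_def using p(2) by (intro sum.cong refl zz_eq) auto
  finally show ?thesis .
qed

lemma KL_path: "KL (path_law (pmf Q) \<theta>0 n) (path_law (pmf Q) \<theta> n) = measure_pmf.expectation (pd Q \<theta>0 n) (rr \<theta>0 \<theta> n)"
proof -
  interpret sigma_finite_measure "count_space (chain_paths n)"
    by (rule sigma_finite_measure_count_space_countable[OF countable_chain_paths])
  have nn0: "\<And>x. 0 \<le> path_pmf (pmf Q) \<theta>0 n x" using t0 by (intro path_pmf_nonneg) auto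
  have nn: "\<And>x. 0 \<le> path_pmf (pmf Q) \<theta> n x" using t by (intro path_pmf_nonneg) auto
  have ac: "\<And>x. path_pmf (pmf Q) \<theta> n x = 0 \<longrightarrow> path_pmf (pmf Q) \<theta>0 n x = 0"
  proof (intro impI)
    fix x assume z: "path_pmf (pmf Q) \<theta> n x = 0"
    show "path_pmf (pmf Q) \<theta>0 n x = 0"
    proof (rule ccontr)
      assume "path_pmf (pmf Q) \<theta>0 n x \<noteq> 0"
      then have pos: "0 < path_pmf (pmf Q) \<theta>0 n x" using nn0[of x] by linarith
      note p = pp_pos[OF pos]
      have "\<And>i. i \<in> {1..n} \<Longrightarrow> 0 < bd_trans \<theta> (x (i - 1)) (x i)" using p(2) bd_trans_pos_iff by blast
      then have "0 < path_pmf (pmf Q) \<theta> n x" unfolding path_pmf_def using p(1) by (intro mult_pos_pos prod_pos) auto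
      with z show False by simp
    qed
  qed
  have "KL (path_law (pmf Q) \<theta>0 n) (path_law (pmf Q) \<theta> n) =
      (\<integral>x. path_pmf (pmf Q) \<theta>0 n x * log (exp 1) (path_pmf (pmf Q) \<theta>0 n x / path_pmf (pmf Q) \<theta> n x) \<partial>count_space (chain_paths n))"
    unfolding KL_def path_law_def
    by (rule KL_density_density) (auto simp: nn nn0 ac)
  also have "\<dots> = (\<integral>x. path_pmf (pmf Q) \<theta>0 n x * rr \<theta>0 \<theta> n x \<partial>count_space (chain_paths n))"
  proof (rule Bochner_Integration.integral_cong[OF refl])
    fix x
    show "path_pmf (pmf Q) \<theta>0 n x * log (exp 1) (path_pmf (pmf Q) \<theta>0 n x / path_pmf (pmf Q) \<theta> n x) = path_pmf (pmf Q) \<theta>0 n x * rr \<theta>0 \<theta> n x"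
    proof (cases "path_pmf (pmf Q) \<theta>0 n x = 0")
      case False
      then have "0 < path_pmf (pmf Q) \<theta>0 n x" using nn0[of x] by linarith
      then show ?thesis using ln_ratio_rr by (simp add: log_def)
    qed simp
  qed
  also have "\<dots> = measure_pmf.expectation (pd Q \<theta>0 n) (rr \<theta>0 \<theta> n)"
    using t0 by (intro integral_count_pd) auto
  finally show ?thesis .
qed

lemma var_le_sq:
  fixes f :: "'b \<Rightarrow> real"
  assumes "\<And>x. \<bar>f x\<bar> \<le> B"
  shows "measure_pmf.expectation M (\<lambda>x. (f x - measure_pmf.expectation M f)^2) \<le> measure_pmf.expectation M (\<lambda>x. (f x)^2)"
proof -
  let ?c = "measure_pmf.expectation M f"
  have i1: "integrable (measure_pmf M) f" by (rule integrable_pmf_bounded[OF assms])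
  have sqb: "\<bar>(f x)^2\<bar> \<le> B^2" for x using power_mono[OF assms[of x] abs_ge_zero, of 2] by simp
  have i2: "integrable (measure_pmf M) (\<lambda>x. (f x)^2)" by (rule integrable_pmf_bounded[OF sqb])
  have "measure_pmf.expectation M (\<lambda>x. (f x - ?c)^2) = measure_pmf.expectation M (\<lambda>x. (f x)^2 - 2 * ?c * f x + ?c^2)"
    by (rule Bochner_Integration.integral_cong) (auto simp: power2_diff algebra_simps)
  also have "\<dots> = measure_pmf.expectation M (\<lambda>x. (f x)^2) - 2 * ?c * ?c + ?c^2"
    using i1 i2 by (simp add: Bochner_Integration.integral_add Bochner_Integration.integral_diff)
  also have "\<dots> \<le> measure_pmf.expectation M (\<lambda>x. (f x)^2)" by (simp add: power2_eq_square)
  finally show ?thesis .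
qed

lemma var_path:
  "var_under (path_law (pmf Q) \<theta>0 n) (log_lik_ratio (pmf Q) n \<theta> \<theta>0) \<le> measure_pmf.expectation (pd Q \<theta>0 n) (\<lambda>x. (rr \<theta>0 \<theta> n x)^2)"
proof -
  have t01: "0 \<le> \<theta>0" "\<theta>0 \<le> 1" using t0 by auto
  have eqAE: "AE x in pd Q \<theta>0 n. log_lik_ratio (pmf Q) n \<theta> \<theta>0 x = rr \<theta>0 \<theta> n x"
  proof (rule AE_pmfI)
    fix x assume "x \<in> set_pmf (pd Q \<theta>0 n)"
    then have "0 < pmf (pd Q \<theta>0 n) x" "x \<in> chain_paths n" by (auto simp: pmf_positive set_pd)
    then have pos: "0 < path_pmf (pmf Q) \<theta>0 n x" by (simp add: pmf_pd[OF t01])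
    then show "log_lik_ratio (pmf Q) n \<theta> \<theta>0 x = rr \<theta>0 \<theta> n x"
      unfolding log_lik_ratio_def using ln_ratio_rr[OF pos] by simp
  qed
  have E: "measure_pmf.expectation (pd Q \<theta>0 n) (log_lik_ratio (pmf Q) n \<theta> \<theta>0) = measure_pmf.expectation (pd Q \<theta>0 n) (rr \<theta>0 \<theta> n)"
    by (rule integral_cong_AE) (use eqAE in auto)
  have "var_under (path_law (pmf Q) \<theta>0 n) (log_lik_ratio (pmf Q) n \<theta> \<theta>0) =
      measure_pmf.expectation (pd Q \<theta>0 n) (\<lambda>x. (log_lik_ratio (pmf Q) n \<theta> \<theta>0 x - measure_pmf.expectation (pd Q \<theta>0 n) (log_lik_ratio (pmf Q) n \<theta> \<theta>0))^2)"
    unfolding var_under_def by (simp add: integral_path_law[OF t01])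
  also have "\<dots> = measure_pmf.expectation (pd Q \<theta>0 n) (\<lambda>x. (rr \<theta>0 \<theta> n x - measure_pmf.expectation (pd Q \<theta>0 n) (rr \<theta>0 \<theta> n))^2)"
    unfolding E by (rule integral_cong_AE) (use eqAE in auto)
  also have "\<dots> \<le> measure_pmf.expectation (pd Q \<theta>0 n) (\<lambda>x. (rr \<theta>0 \<theta> n x)^2)"
    by (rule var_le_sq[OF rr_bound])
  finally show ?thesis .
qed

end

lemma one_plus_pow_le_e: "0 < (j::nat) \<Longrightarrow> (1 + 1 / real j) ^ j \<le> exp 1"
proof -
  assume j: "0 < j"
  have "(1 + 1 / real j) ^ j \<le> (exp (1 / real j)) ^ j"
    by (intro power_mono) (auto simp: exp_ge_add_one_self add.commute)
  also have "\<dots> = exp 1" using j by (simp add: exp_of_nat_mult[symmetric])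
  finally show ?thesis .
qed

lemma e_le_one_plus_pow: "0 < (j::nat) \<Longrightarrow> exp 1 \<le> (1 + 1 / real j) ^ (j + 1)"
proof -
  assume j: "0 < j"
  have pos: "0 < 1 + 1 / real j" using j by (simp add: add_pos_nonneg)
  have "ln (1 / (1 + 1 / real j)) \<le> 1 / (1 + 1 / real j) - 1" using pos by (intro ln_le_minus_one) auto
  then have "1 / (real j + 1) \<le> ln (1 + 1 / real j)"
    using j by (simp add: ln_div field_simps)
  then have "1 \<le> real (j + 1) * ln (1 + 1 / real j)" using j by (simp add: field_simps)
  also have "\<dots> = ln ((1 + 1 / real j) ^ (j + 1))" by (rule ln_realpow[symmetric])
  finally show ?thesis using j by (metis exp_le_cancel_iff exp_ln add_pos_pos zero_less_one divide_pos_pos of_nat_0_less_iff zero_less_power)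
qed

lemma pow_le_exp_fact: "real j ^ j \<le> exp (real j) * fact j"
proof (induction j)
  case 0 then show ?case by simp
next
  case (Suc j)
  show ?case
  proof (cases "j = 0")
    case True then show ?thesis by (simp add: exp_ge_add_one_self[of 1, simplified])
  next
    case False
    then have j: "0 < j" by simp
    have "real (Suc j) ^ Suc j = real (Suc j) * ((1 + 1 / real j) ^ j * real j ^ j)"
      using j by (simp add: field_simps power_mult_distrib[symmetric])
    also have "\<dots> \<le> real (Suc j) * (exp 1 * (exp (real j) * fact j))"
      using one_plus_pow_le_e[OF j] Suc.IH by (intro mult_left_mono mult_mono) auto
    also have "\<dots> = exp (real (Suc j)) * fact (Suc j)" by (simp add: exp_add[symmetric] algebra_simps)
    finally show ?thesis .
  qed
qed

lemma fact_le_pow: "0 < (j::nat) \<Longrightarrow> fact j * exp (real j) \<le> exp 1 * real j ^ (j + 1)"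
proof (induction j rule: nat_induct_non_zero)
  case 1 then show ?case by simp
next
  case (Suc j)
  have "fact (Suc j) * exp (real (Suc j)) = real (Suc j) * exp 1 * (fact j * exp (real j))"
    by (simp add: exp_add[symmetric] algebra_simps)
  also have "\<dots> \<le> real (Suc j) * exp 1 * (exp 1 * real j ^ (j + 1))"
    using Suc.IH by (intro mult_left_mono) auto
  also have "\<dots> \<le> real (Suc j) * exp 1 * ((1 + 1 / real j) ^ (j + 1) * real j ^ (j + 1))"
    using e_le_one_plus_pow[OF Suc.hyps] by (intro mult_left_mono mult_right_mono) auto
  also have "(1 + 1 / real j) ^ (j + 1) * real j ^ (j + 1) = real (Suc j) ^ (j + 1)"
    using Suc.hyps by (simp add: power_mult_distrib[symmetric] field_simps)
  also have "real (Suc j) * exp 1 * real (Suc j) ^ (j + 1) = exp 1 * real (Suc j) ^ (Suc j + 1)"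
    by simp
  finally show ?case .
qed

lemma xlnx_mono: "1 \<le> u \<Longrightarrow> u \<le> v \<Longrightarrow> u * ln u - u \<le> v * ln v - (v::real)"
proof -
  assume uv: "1 \<le> u" "u \<le> v"
  show ?thesis
  proof (rule DERIV_nonneg_imp_nondecreasing[OF uv(2)])
    fix x assume x: "u \<le> x" "x \<le> v"
    show "\<exists>y. ((\<lambda>x. x * ln x - x) has_real_derivative y) (at x) \<and> 0 \<le> y"
      using x uv by (intro exI[of _ "ln x"]) (auto intro!: derivative_eq_intros)
  qed
qed

lemma ln_Gamma_lower:
  fixes x :: real assumes x: "3 \<le> x"
  shows "(x - 2) * ln (x - 2) - (x - 2) \<le> ln (Gamma x)"
proof -
  define k where "k = nat \<lfloor>x\<rfloor>"
  have k: "real k \<le> x" "x < real k + 1" "3 \<le> k" using x unfolding k_def by linarith+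
  have "Gamma (real k) \<le> Gamma x"
  proof (cases "real k = x")
    case False then show ?thesis using k by (intro less_imp_le Gamma_real_strict_mono) auto
  qed simp
  moreover have "Gamma (real k) = fact (k - 1)"
    using Gamma_fact[of "k - 1"] k by (simp add: of_nat_diff)
  ultimately have g: "ln (fact (k - 1)) \<le> ln (Gamma x)" using k by (intro ln_mono) auto
  have "real (k - 1) ^ (k - 1) \<le> exp (real (k - 1)) * fact (k - 1)" by (rule pow_le_exp_fact)
  then have "ln (real (k - 1) ^ (k - 1)) \<le> ln (exp (real (k - 1)) * fact (k - 1))"
    using k by (intro ln_mono) auto
  then have "real (k - 1) * ln (real (k - 1)) - real (k - 1) \<le> ln (fact (k - 1))"
    using k by (simp add: ln_realpow ln_mult)
  moreover have "(x - 2) * ln (x - 2) - (x - 2) \<le> real (k - 1) * ln (real (k - 1)) - real (k - 1)"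
    using k x by (intro xlnx_mono) (auto simp: of_nat_diff)
  ultimately show ?thesis using g by linarith
qed

lemma ln_Gamma_upper:
  assumes n: "0 < n"
  shows "ln (Gamma (real n)) \<le> real n * ln (real n) - real n + 1"
proof -
  have G: "Gamma (real n) = fact n / real n"
  proof -
    have "Gamma (real n) = fact (n - 1)" using Gamma_fact[of "n - 1"] n by (simp add: of_nat_diff)
    also have "\<dots> = fact n / real n" using n by (metis fact_reduce nonzero_mult_div_cancel_left of_nat_0_less_iff less_irrefl of_nat_fact)
    finally show ?thesis .
  qed
  have "fact n * exp (real n) \<le> exp 1 * real n ^ (n + 1)" by (rule fact_le_pow[OF n])
  then have "ln (fact n * exp (real n)) \<le> ln (exp 1 * real n ^ (n + 1))"
    using n by (intro ln_mono) auto
  then have "ln (fact n) + real n \<le> 1 + real (n + 1) * ln (real n)"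
    using n by (simp add: ln_mult ln_realpow algebra_simps)
  then show ?thesis using n unfolding G by (simp add: ln_div algebra_simps)
qed

lemma xlnx_diff: "2 < (x::real) \<Longrightarrow> x * ln x - (x - 2) * ln (x - 2) \<le> 2 * ln x + 2"
proof -
  assume x: "2 < x"
  have "ln (x / (x - 2)) \<le> x / (x - 2) - 1" using x by (intro ln_le_minus_one) auto
  then have "(x - 2) * ln (x / (x - 2)) \<le> (x - 2) * (x / (x - 2) - 1)" using x by (intro mult_left_mono) auto
  also have "\<dots> = 2" using x by (simp add: field_simps)
  finally have "(x - 2) * (ln x - ln (x - 2)) \<le> 2" using x by (simp add: ln_div)
  then show ?thesis by (simp add: algebra_simps)
qed

lemma integral_le_max:
  fixes \<phi> \<psi> :: "'a \<Rightarrow> real"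
  assumes "integrable M \<psi>" "\<And>x. \<phi> x \<le> \<psi> x"
  shows "integral\<^sup>L M \<phi> \<le> max 0 (integral\<^sup>L M \<psi>)"
proof (cases "integrable M \<phi>")
  case True
  then have "integral\<^sup>L M \<phi> \<le> integral\<^sup>L M \<psi>" using assms by (intro integral_mono) auto
  then show ?thesis by simp
next
  case False then show ?thesis by (simp add: not_integrable_integral_eq)
qed

lemma bdens_pos: "0 < a \<Longrightarrow> 0 < b \<Longrightarrow> 0 < y \<Longrightarrow> y < 1 \<Longrightarrow> 0 < bdens a b y"
  unfolding bdens_def using Beta_pos[of a b] by (auto simp: indicator_def)

lemma ln_bdens: "0 < a \<Longrightarrow> 0 < b \<Longrightarrow> 0 < y \<Longrightarrow> y < 1 \<Longrightarrow>
   ln (bdens a b y) = (a - 1) * ln y + (b - 1) * ln (1 - y) - ln (Beta a b)"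
  unfolding bdens_def using Beta_pos[of a b] by (simp add: indicator_def ln_mult ln_div)

lemma lnBeta_lower:
  fixes \<alpha> \<beta> :: real
  assumes "3 \<le> \<alpha>" "3 \<le> \<beta>" "\<alpha> + \<beta> = real n"
  shows "\<alpha> * ln (\<alpha> / real n) + \<beta> * ln (\<beta> / real n) - 2 * ln \<alpha> - 2 * ln \<beta> - 1 \<le> ln (Beta \<alpha> \<beta>)"
proof -
  have n: "0 < n" using assms by (metis add_pos_pos less_le_trans of_nat_0_less_iff zero_less_numeral)
  have "ln (Beta \<alpha> \<beta>) = ln (Gamma \<alpha>) + ln (Gamma \<beta>) - ln (Gamma (real n))"
  proof -
    have "0 < Gamma \<alpha>" "0 < Gamma \<beta>" "0 < Gamma (real n)" using assms n by auto
    then show ?thesis unfolding Beta_def assms(3) by (simp add: ln_mult ln_div)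
  qed
  moreover have "(\<alpha> - 2) * ln (\<alpha> - 2) - (\<alpha> - 2) \<le> ln (Gamma \<alpha>)" "(\<beta> - 2) * ln (\<beta> - 2) - (\<beta> - 2) \<le> ln (Gamma \<beta>)"
    using assms by (auto intro!: ln_Gamma_lower)
  moreover have "ln (Gamma (real n)) \<le> real n * ln (real n) - real n + 1" by (rule ln_Gamma_upper[OF n])
  moreover have "\<alpha> * ln \<alpha> - (\<alpha> - 2) * ln (\<alpha> - 2) \<le> 2 * ln \<alpha> + 2" "\<beta> * ln \<beta> - (\<beta> - 2) * ln (\<beta> - 2) \<le> 2 * ln \<beta> + 2"
    using assms by (auto intro!: xlnx_diff)
  moreover have "\<alpha> * ln (\<alpha> / real n) + \<beta> * ln (\<beta> / real n) = \<alpha> * ln \<alpha> + \<beta> * ln \<beta> - real n * ln (real n)"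
    using assms n by (simp add: ln_div algebra_simps flip: assms(3))
  ultimately show ?thesis using assms(3) by linarith
qed

lemma KL_rbeta:
  fixes a b \<alpha> \<beta> :: real
  assumes ab: "0 < a" "0 < b" and le: "a \<le> \<alpha>" "b \<le> \<beta>" and big: "3 \<le> \<alpha>" "3 \<le> \<beta>"
  defines "m \<equiv> \<alpha> / (\<alpha> + \<beta>)"
  shows "KL (rbeta \<alpha> \<beta>) (rbeta a b) \<le> max 0 (ln (Beta a b) - ln (Beta \<alpha> \<beta>) + (\<alpha> - a) * ln m + (\<beta> - b) * ln (1 - m))"
proof -
  have al: "0 < \<alpha>" "0 < \<beta>" using big by auto
  have m: "0 < m" "m < 1" using al unfolding m_def by (auto simp: field_simps)
  have m1: "1 - m = \<beta> / (\<alpha> + \<beta>)" using al unfolding m_def by (simp add: field_simps)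
  define L where "L = ln (Beta a b) - ln (Beta \<alpha> \<beta>)"
  define H where "H y = L + (\<alpha> - a) * (ln m + (y - m) / m) + (\<beta> - b) * (ln (1 - m) + (m - y) / (1 - m))" for y
  define c0 where "c0 = L + (\<alpha> - a) * (ln m - 1) + (\<beta> - b) * (ln (1 - m) + m / (1 - m))"
  define c1 where "c1 = (\<alpha> - a) / m - (\<beta> - b) / (1 - m)"
  have Hc: "H y = c0 + c1 * y" for y
  proof -
    have e1: "(y - m) / m = y / m - 1" using m by (simp add: diff_divide_distrib)
    have e2: "(m - y) / (1 - m) = m / (1 - m) - y / (1 - m)" by (simp add: diff_divide_distrib)
    show ?thesis unfolding H_def c0_def c1_def e1 e2 by (simp add: algebra_simps)
  qed
  have Hm: "H m = L + (\<alpha> - a) * ln m + (\<beta> - b) * ln (1 - m)" unfolding H_def by simp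
  define g where "g \<theta> = 2 * bdens \<alpha> \<beta> (2 * \<theta>)" for \<theta> :: real
  define f where "f \<theta> = 2 * bdens a b (2 * \<theta>)" for \<theta> :: real
  have [measurable]: "g \<in> borel_measurable borel" "f \<in> borel_measurable borel"
    unfolding g_def f_def by measurable
  have gnn: "0 \<le> g \<theta>" for \<theta> unfolding g_def using bdens_nonneg[OF al] by simp
  have fnn: "0 \<le> f \<theta>" for \<theta> unfolding f_def using bdens_nonneg[OF ab] by simp
  have ac: "f \<theta> = 0 \<longrightarrow> g \<theta> = 0" for \<theta>
  proof
    assume "f \<theta> = 0"
    then have "\<not> (0 < 2 * \<theta> \<and> 2 * \<theta> < 1)" using bdens_pos[OF ab, of "2 * \<theta>"] unfolding f_def by auto
    then have "bdens \<alpha> \<beta> (2 * \<theta>) = 0" unfolding bdens_def by (auto simp: indicator_def)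
    then show "g \<theta> = 0" unfolding g_def by simp
  qed
  interpret lb: sigma_finite_measure "lborel :: real measure" by (rule sigma_finite_lborel)
  have "KL (rbeta \<alpha> \<beta>) (rbeta a b) = KL_divergence (exp 1) (density lborel f) (density lborel g)"
    unfolding KL_def rbeta_density f_def g_def ..
  also have "\<dots> = (\<integral>\<theta>. g \<theta> * log (exp 1) (g \<theta> / f \<theta>) \<partial>lborel)"
    by (rule sigma_finite_measure.KL_density_density[OF sigma_finite_lborel]) (auto simp: gnn fnn ac)
  also have "\<dots> \<le> max 0 (\<integral>\<theta>. g \<theta> * H (2 * \<theta>) \<partial>lborel)"
  proof (rule integral_le_max)
    have I: "has_bochner_integral lborel (\<lambda>y. bdens \<alpha> \<beta> y * (c0 + c1 * y)) (c0 + c1 * (\<alpha> / (\<alpha> + \<beta>)))"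
      using big by (intro E_lin) auto
    then have "has_bochner_integral lborel (\<lambda>\<theta>. bdens \<alpha> \<beta> (0 + 2 * \<theta>) * (c0 + c1 * (0 + 2 * \<theta>))) ((c0 + c1 * (\<alpha> / (\<alpha> + \<beta>))) /\<^sub>R \<bar>2\<bar>)"
      by (subst (asm) lborel_has_bochner_integral_real_affine_iff[where c=2 and t=0]) auto
    then have "has_bochner_integral lborel (\<lambda>\<theta>. 2 * (bdens \<alpha> \<beta> (0 + 2 * \<theta>) * (c0 + c1 * (0 + 2 * \<theta>)))) (2 * ((c0 + c1 * (\<alpha> / (\<alpha> + \<beta>))) /\<^sub>R \<bar>2\<bar>))"
      by (rule has_bochner_integral_mult_right)
    moreover have v: "2 * ((c0 + c1 * (\<alpha> / (\<alpha> + \<beta>))) /\<^sub>R \<bar>2\<bar>) = H m" unfolding Hc m_def by simp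
    moreover have f: "\<And>\<theta>. 2 * (bdens \<alpha> \<beta> (0 + 2 * \<theta>) * (c0 + c1 * (0 + 2 * \<theta>))) = g \<theta> * H (2 * \<theta>)"
      unfolding g_def Hc by simp
    ultimately have I2: "has_bochner_integral lborel (\<lambda>\<theta>. g \<theta> * H (2 * \<theta>)) (H m)"
      by simp
    then show "integrable lborel (\<lambda>\<theta>. g \<theta> * H (2 * \<theta>))" by (simp add: has_bochner_integral_iff)
  next
    fix \<theta> :: real
    show "g \<theta> * log (exp 1) (g \<theta> / f \<theta>) \<le> g \<theta> * H (2 * \<theta>)"
    proof (cases "0 < 2 * \<theta> \<and> 2 * \<theta> < 1")
      case False
      then have "g \<theta> = 0" unfolding g_def bdens_def by (auto simp: indicator_def)
      then show ?thesis by simp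
    next
      case True
      define y where "y = 2 * \<theta>"
      have y: "0 < y" "y < 1" using True unfolding y_def by auto
      have pa: "0 < bdens \<alpha> \<beta> y" "0 < bdens a b y" using bdens_pos al ab y by auto
      have "log (exp 1) (g \<theta> / f \<theta>) = ln (bdens \<alpha> \<beta> y) - ln (bdens a b y)"
        unfolding g_def f_def y_def[symmetric] using pa by (simp add: log_def ln_div)
      also have "\<dots> = L + (\<alpha> - a) * ln y + (\<beta> - b) * ln (1 - y)"
        unfolding L_def using ln_bdens[OF al y] ln_bdens[OF ab y] by (simp add: algebra_simps)
      also have "\<dots> \<le> H y"
      proof -
        have "ln (y / m) \<le> y / m - 1" using y m by (intro ln_le_minus_one) auto
        then have "ln y \<le> ln m + (y - m) / m" using y m by (simp add: ln_div diff_divide_distrib)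
        then have A: "(\<alpha> - a) * ln y \<le> (\<alpha> - a) * (ln m + (y - m) / m)" using le by (intro mult_left_mono) auto
        have "ln ((1 - y) / (1 - m)) \<le> (1 - y) / (1 - m) - 1" using y m by (intro ln_le_minus_one) auto
        then have "ln (1 - y) \<le> ln (1 - m) + (m - y) / (1 - m)" using y m by (simp add: ln_div field_simps)
        then have B: "(\<beta> - b) * ln (1 - y) \<le> (\<beta> - b) * (ln (1 - m) + (m - y) / (1 - m))" using le by (intro mult_left_mono) auto
        show ?thesis unfolding H_def using A B by linarith
      qed
      finally show ?thesis using gnn[of \<theta>] unfolding y_def by (intro mult_left_mono) auto
    qed
  qed
  also have "(\<integral>\<theta>. g \<theta> * H (2 * \<theta>) \<partial>lborel) = H m"
  proof -
    have I: "has_bochner_integral lborel (\<lambda>y. bdens \<alpha> \<beta> y * (c0 + c1 * y)) (c0 + c1 * (\<alpha> / (\<alpha> + \<beta>)))"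
      using big by (intro E_lin) auto
    then have "has_bochner_integral lborel (\<lambda>\<theta>. bdens \<alpha> \<beta> (0 + 2 * \<theta>) * (c0 + c1 * (0 + 2 * \<theta>))) ((c0 + c1 * (\<alpha> / (\<alpha> + \<beta>))) /\<^sub>R \<bar>2\<bar>)"
      by (subst (asm) lborel_has_bochner_integral_real_affine_iff[where c=2 and t=0]) auto
    then have "has_bochner_integral lborel (\<lambda>\<theta>. 2 * (bdens \<alpha> \<beta> (0 + 2 * \<theta>) * (c0 + c1 * (0 + 2 * \<theta>)))) (2 * ((c0 + c1 * (\<alpha> / (\<alpha> + \<beta>))) /\<^sub>R \<bar>2\<bar>))"
      by (rule has_bochner_integral_mult_right)
    moreover have v: "2 * ((c0 + c1 * (\<alpha> / (\<alpha> + \<beta>))) /\<^sub>R \<bar>2\<bar>) = H m" unfolding Hc m_def by simp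
    moreover have f: "\<And>\<theta>. 2 * (bdens \<alpha> \<beta> (0 + 2 * \<theta>) * (c0 + c1 * (0 + 2 * \<theta>))) = g \<theta> * H (2 * \<theta>)"
      unfolding g_def Hc by simp
    ultimately have I2: "has_bochner_integral lborel (\<lambda>\<theta>. g \<theta> * H (2 * \<theta>)) (H m)"
      by simp
    then show ?thesis by (simp add: has_bochner_integral_iff)
  qed
  finally show ?thesis unfolding Hm L_def by simp
qed

lemma exists_pmf:
  fixes q0 :: "nat \<Rightarrow> real"
  assumes "\<forall>i. 0 \<le> q0 i" "(q0 has_sum 1) UNIV"
  shows "\<exists>Q. pmf Q = q0"
proof -
  have s: "q0 sums 1" by (rule has_sum_imp_sums[OF assms(2)])
  have "(\<integral>\<^sup>+x. ennreal (q0 x) \<partial>count_space UNIV) = (\<Sum>i. ennreal (q0 i))"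
    by (rule nn_integral_count_space_nat)
  also have "\<dots> = ennreal (\<Sum>i. q0 i)"
    using assms(1) s by (intro suminf_ennreal2) (auto simp: sums_summable)
  also have "(\<Sum>i. q0 i) = 1" using s by (simp add: sums_iff)
  finally have "(\<integral>\<^sup>+x. ennreal (q0 x) \<partial>count_space UNIV) = 1" by simp
  then show ?thesis using assms(1) pmf_embed_pmf[of q0] by (intro exI[of _ "embed_pmf q0"]) auto
qed

lemma ln_le_two_sqrt: "0 < (x::real) \<Longrightarrow> ln x \<le> 2 * sqrt x"
proof -
  assume x: "0 < x"
  have "ln (sqrt x) \<le> sqrt x - 1" using x by (intro ln_le_minus_one) auto
  moreover have "ln (sqrt x) = ln x / 2" using x by (simp add: ln_sqrt)
  ultimately show ?thesis by simp
qed

context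
  fixes \<theta>0 m :: real and n :: nat
  assumes t0: "0 < \<theta>0" "\<theta>0 < 1/2" and mdef: "m = 2 * \<theta>0" and mn: "4 \<le> m * real n"
begin

lemma m01: "0 < m" "m < 1" using t0 mdef by auto

lemma npos: "0 < real n" using n_pos[of m "real n"] m01 mn by auto

lemma ab_pos: "2 < m * real n" "0 < (1 - m) * real n" using mn m01 npos by auto

lemma C1_bound:
  "(\<integral>\<^sup>+ \<theta>. ennreal (KL (path_law (pmf Q) \<theta>0 n) (path_law (pmf Q) \<theta> n)) \<partial>rbeta (m * real n) ((1 - m) * real n)) \<le> ennreal 2"
proof -
  let ?\<rho> = "rbeta (m * real n) ((1 - m) * real n)"
  define h where "h y = real n * ((y - m)^2 / y)" for y
  have "(\<integral>\<^sup>+ \<theta>. ennreal (KL (path_law (pmf Q) \<theta>0 n) (path_law (pmf Q) \<theta> n)) \<partial>?\<rho>) \<le> (\<integral>\<^sup>+ \<theta>. ennreal (h (2 * \<theta>)) \<partial>?\<rho>)"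
  proof (rule nn_integral_mono_AE)
    show "AE \<theta> in ?\<rho>. ennreal (KL (path_law (pmf Q) \<theta>0 n) (path_law (pmf Q) \<theta> n)) \<le> ennreal (h (2 * \<theta>))"
      using AE_rbeta
    proof (rule AE_mp, intro AE_I2 impI)
      fix \<theta> :: real assume t: "0 < \<theta> \<and> \<theta> < 1/2"
      then have t': "0 < \<theta>" "\<theta> < 1/2" by auto
      have "KL (path_law (pmf Q) \<theta>0 n) (path_law (pmf Q) \<theta> n) = measure_pmf.expectation (pd Q \<theta>0 n) (rr \<theta>0 \<theta> n)"
        by (rule KL_path[OF t0 t'])
      also have "\<dots> \<le> real n * kl \<theta>0 \<theta>" by (rule E_rr[OF t0 t'])
      also have "\<dots> \<le> real n * ((2 * \<theta> - 2 * \<theta>0)^2 / (2 * \<theta>))"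
        by (intro mult_left_mono kl_le[OF t0 t']) auto
      also have "\<dots> = h (2 * \<theta>)" unfolding h_def mdef ..
      finally show "ennreal (KL (path_law (pmf Q) \<theta>0 n) (path_law (pmf Q) \<theta> n)) \<le> ennreal (h (2 * \<theta>))"
        by (rule ennreal_leI)
    qed
  qed
  also have "(\<integral>\<^sup>+ \<theta>. ennreal (h (2 * \<theta>)) \<partial>?\<rho>) = ennreal (real n * ((m * real n) / (m * real n + (1 - m) * real n) - 2 * m + m^2 * ((m * real n + (1 - m) * real n - 1) / (m * real n - 1))))"
  proof (rule nn_rbeta_eval)
    show "h \<in> borel_measurable borel" unfolding h_def by measurable
    show "0 < m * real n" "0 < (1 - m) * real n" using ab_pos by auto
    have "has_bochner_integral lborel (\<lambda>y. real n * (bdens (m * real n) ((1 - m) * real n) y * ((y - m)^2 / y)))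
       (real n * ((m * real n) / (m * real n + (1 - m) * real n) - 2 * m + m^2 * ((m * real n + (1 - m) * real n - 1) / (m * real n - 1))))"
      by (intro has_bochner_integral_mult_right E_sq ab_pos)
    then show "has_bochner_integral lborel (\<lambda>y. bdens (m * real n) ((1 - m) * real n) y * h y)
       (real n * ((m * real n) / (m * real n + (1 - m) * real n) - 2 * m + m^2 * ((m * real n + (1 - m) * real n - 1) / (m * real n - 1))))"
      unfolding h_def by (simp add: ac_simps)
    fix y :: real assume "0 < y" "y < 1"
    then show "0 \<le> h y" unfolding h_def by simp
  qed
  also have "\<dots> \<le> ennreal 2"
  proof (rule ennreal_leI)
    have "real n * ((m * real n) / (m * real n + (1 - m) * real n) - 2 * m + m^2 * ((m * real n + (1 - m) * real n - 1) / (m * real n - 1)))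
        = real n * (m * (1 - m) / (m * real n - 1))"
      using V2_eq[of m "real n"] m01 ab_pos by simp
    also have "\<dots> \<le> real n * (2 / real n)"
      using V2_bound[of m "real n"] m01 ab_pos npos by (intro mult_left_mono) auto
    also have "\<dots> = 2" using npos by simp
    finally show "real n * ((m * real n) / (m * real n + (1 - m) * real n) - 2 * m + m^2 * ((m * real n + (1 - m) * real n - 1) / (m * real n - 1))) \<le> 2" .
  qed
  finally show ?thesis .
qed

end

context
  fixes \<theta>0 m :: real and n :: nat
  assumes t0: "0 < \<theta>0" "\<theta>0 < 1/2" and mdef: "m = 2 * \<theta>0" and mn: "4 \<le> m * real n"
begin

lemma C2_bound:
  "(\<integral>\<^sup>+ \<theta>. ennreal (var_under (path_law (pmf Q) \<theta>0 n) (log_lik_ratio (pmf Q) n \<theta> \<theta>0)) \<partial>rbeta (m * real n) ((1 - m) * real n))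
     \<le> ennreal (132 / m^2 + 9)"
proof -
  note m01 = m01[OF t0 mdef mn] and npos = npos[OF t0 mdef mn] and ab_pos = ab_pos[OF t0 mdef mn]
  let ?\<rho> = "rbeta (m * real n) ((1 - m) * real n)"
  define h where "h y = 3 * (real n * (real n * ((y - m)^4 / y^2) + 3/2 * ((y - m)^2 / y)))" for y
  define V2 where "V2 = (m * real n) / (m * real n + (1 - m) * real n) - 2 * m + m^2 * ((m * real n + (1 - m) * real n - 1) / (m * real n - 1))"
  define V4 where "V4 = (m*real n) * (m*real n + 1) / ((m*real n + (1-m)*real n) * (m*real n + (1-m)*real n + 1)) - 4 * m * ((m*real n) / (m*real n + (1-m)*real n)) + 6 * m^2
         - 4 * m^3 * ((m*real n + (1-m)*real n - 1) / (m*real n - 1)) + m^4 * ((m*real n + (1-m)*real n - 1) * (m*real n + (1-m)*real n - 2) / ((m*real n - 1) * (m*real n - 2)))"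
  have "(\<integral>\<^sup>+ \<theta>. ennreal (var_under (path_law (pmf Q) \<theta>0 n) (log_lik_ratio (pmf Q) n \<theta> \<theta>0)) \<partial>?\<rho>) \<le> (\<integral>\<^sup>+ \<theta>. ennreal (h (2 * \<theta>)) \<partial>?\<rho>)"
  proof (rule nn_integral_mono_AE)
    show "AE \<theta> in ?\<rho>. ennreal (var_under (path_law (pmf Q) \<theta>0 n) (log_lik_ratio (pmf Q) n \<theta> \<theta>0)) \<le> ennreal (h (2 * \<theta>))"
      using AE_rbeta
    proof (rule AE_mp, intro AE_I2 impI)
      fix \<theta> :: real assume t: "0 < \<theta> \<and> \<theta> < 1/2"
      then have t': "0 < \<theta>" "\<theta> < 1/2" by auto
      let ?kl = "kl \<theta>0 \<theta>" and ?w = "w \<theta>0 \<theta>"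
      have X0: "0 \<le> real n * (real n * ?kl^2 + ?w)" using w_nonneg[OF t0 t'] by simp
      have e: "(1 + 1 / real n) ^ n \<le> 3"
        using one_plus_pow_le_e[of n] exp_le npos by simp
      have "var_under (path_law (pmf Q) \<theta>0 n) (log_lik_ratio (pmf Q) n \<theta> \<theta>0) \<le> measure_pmf.expectation (pd Q \<theta>0 n) (\<lambda>x. (rr \<theta>0 \<theta> n x)^2)"
        by (rule var_path[OF t0 t'])
      also have "\<dots> \<le> (1 + 1 / real n) ^ n * (real n * (real n * ?kl^2 + ?w))"
        by (rule E_rr2[OF t0 t' npos])
      also have "\<dots> \<le> 3 * (real n * (real n * ?kl^2 + ?w))"
        using e X0 by (intro mult_right_mono) auto
      also have "\<dots> \<le> h (2 * \<theta>)"
      proof -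
        have "?kl \<le> (2 * \<theta> - m)^2 / (2 * \<theta>)" using kl_le[OF t0 t'] mdef by simp
        then have "?kl^2 \<le> ((2 * \<theta> - m)^2 / (2 * \<theta>))^2" using kl_nonneg[OF t0 t'] by (intro power_mono) auto
        also have "((2 * \<theta> - m)^2 / (2 * \<theta>))^2 = (2 * \<theta> - m)^4 / (2 * \<theta>)^2"
          by (simp add: power_divide flip: power_mult)
        finally have k: "?kl^2 \<le> (2 * \<theta> - m)^4 / (2 * \<theta>)^2" .
        have ww: "?w \<le> 3/2 * ((2 * \<theta> - m)^2 / (2 * \<theta>))" using w_le[OF t0 t'] mdef by simp
        have "real n * ?kl^2 + ?w \<le> real n * ((2 * \<theta> - m)^4 / (2 * \<theta>)^2) + 3/2 * ((2 * \<theta> - m)^2 / (2 * \<theta>))"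
          using k ww by (intro add_mono mult_left_mono) auto
        then show ?thesis unfolding h_def by (intro mult_left_mono) auto
      qed
      finally show "ennreal (var_under (path_law (pmf Q) \<theta>0 n) (log_lik_ratio (pmf Q) n \<theta> \<theta>0)) \<le> ennreal (h (2 * \<theta>))"
        by (rule ennreal_leI)
    qed
  qed
  also have "(\<integral>\<^sup>+ \<theta>. ennreal (h (2 * \<theta>)) \<partial>?\<rho>) = ennreal (3 * real n * real n * V4 + 3 * real n * (3/2) * V2)"
  proof (rule nn_rbeta_eval)
    show "h \<in> borel_measurable borel" unfolding h_def by measurable
    show "0 < m * real n" "0 < (1 - m) * real n" using ab_pos by auto
    have "has_bochner_integral lborel (\<lambda>y. (3 * real n * real n) * (bdens (m * real n) ((1 - m) * real n) y * ((y - m)^4 / y^2))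
        + (3 * real n * (3/2)) * (bdens (m * real n) ((1 - m) * real n) y * ((y - m)^2 / y)))
       ((3 * real n * real n) * V4 + (3 * real n * (3/2)) * V2)"
      unfolding V4_def V2_def
      by (intro has_bochner_integral_add has_bochner_integral_mult_right E_sq E_four ab_pos)
    then show "has_bochner_integral lborel (\<lambda>y. bdens (m * real n) ((1 - m) * real n) y * h y)
       (3 * real n * real n * V4 + 3 * real n * (3/2) * V2)"
      by (rule has_bochner_integral_cong[THEN iffD1, rotated -1]) (auto simp: h_def algebra_simps)
    fix y :: real assume "0 < y" "y < 1"
    then show "0 \<le> h y" unfolding h_def by simp
  qed
  also have "\<dots> \<le> ennreal (132 / m^2 + 9)"
  proof (rule ennreal_leI)
    have v2: "V2 \<le> 2 / real n"
      unfolding V2_def using V2_eq[of m "real n"] V2_bound[of m "real n"] m01 ab_pos by simp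
    have v4: "V4 \<le> 44 / (m^2 * (real n)^2)"
      unfolding V4_def using V4_eq[of m "real n"] V4_bound[of m "real n"] m01 ab_pos mn by simp
    have "3 * real n * real n * V4 + 3 * real n * (3/2) * V2 \<le> 3 * real n * real n * (44 / (m^2 * (real n)^2)) + 3 * real n * (3/2) * (2 / real n)"
      using v2 v4 npos by (intro add_mono mult_left_mono) auto
    also have "\<dots> = 132 / m^2 + 9" using npos m01 by (simp add: field_simps power2_eq_square)
    finally show "3 * real n * real n * V4 + 3 * real n * (3/2) * V2 \<le> 132 / m^2 + 9" .
  qed
  finally show ?thesis .
qed

end

lemma C3_bound:
  fixes a b m :: real and n :: nat
  assumes ab: "0 < a" "0 < b" and m: "0 < m" "m < 1"
    and le: "a \<le> m * real n" "b \<le> (1 - m) * real n" and big: "3 \<le> m * real n" "3 \<le> (1 - m) * real n"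
  shows "KL (rbeta (m * real n) ((1 - m) * real n)) (rbeta a b)
     \<le> (\<bar>ln (Beta a b)\<bar> + a * \<bar>ln m\<bar> + b * \<bar>ln (1 - m)\<bar> + 1) + 8 * sqrt (real n)"
proof -
  define \<alpha> where "\<alpha> = m * real n"
  define \<beta> where "\<beta> = (1 - m) * real n"
  have sum: "\<alpha> + \<beta> = real n" unfolding \<alpha>_def \<beta>_def by (simp add: algebra_simps)
  have npos: "0 < real n" using n_pos[of m "real n"] big m by simp
  have ma: "\<alpha> / (\<alpha> + \<beta>) = m" using npos by (subst sum) (simp add: \<alpha>_def)
  have mb: "\<beta> / real n = 1 - m" unfolding \<beta>_def using npos by simp
  have a3: "3 \<le> \<alpha>" "3 \<le> \<beta>" using big unfolding \<alpha>_def \<beta>_def by auto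
  have "KL (rbeta \<alpha> \<beta>) (rbeta a b) \<le> max 0 (ln (Beta a b) - ln (Beta \<alpha> \<beta>) + (\<alpha> - a) * ln (\<alpha> / (\<alpha> + \<beta>)) + (\<beta> - b) * ln (1 - \<alpha> / (\<alpha> + \<beta>)))"
    using le big ab unfolding \<alpha>_def \<beta>_def by (intro KL_rbeta) auto
  also have "\<dots> = max 0 (ln (Beta a b) - ln (Beta \<alpha> \<beta>) + (\<alpha> - a) * ln m + (\<beta> - b) * ln (1 - m))"
    unfolding ma ..
  also have "\<dots> \<le> (\<bar>ln (Beta a b)\<bar> + a * \<bar>ln m\<bar> + b * \<bar>ln (1 - m)\<bar> + 1) + 8 * sqrt (real n)"
  proof (rule max.boundedI)
    have lb: "\<alpha> * ln (\<alpha> / real n) + \<beta> * ln (\<beta> / real n) - 2 * ln \<alpha> - 2 * ln \<beta> - 1 \<le> ln (Beta \<alpha> \<beta>)"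
      by (rule lnBeta_lower[OF a3 sum])
    have "\<alpha> / real n = m" using ma sum by simp
    then have lb': "\<alpha> * ln m + \<beta> * ln (1 - m) - 2 * ln \<alpha> - 2 * ln \<beta> - 1 \<le> ln (Beta \<alpha> \<beta>)"
      using lb mb by simp
    have la: "ln \<alpha> \<le> 2 * sqrt (real n)"
    proof -
      have "ln \<alpha> \<le> 2 * sqrt \<alpha>" using a3 by (intro ln_le_two_sqrt) auto
      also have "sqrt \<alpha> \<le> sqrt (real n)" using sum a3 by simp
      finally show ?thesis by simp
    qed
    have lbb: "ln \<beta> \<le> 2 * sqrt (real n)"
    proof -
      have "ln \<beta> \<le> 2 * sqrt \<beta>" using a3 by (intro ln_le_two_sqrt) auto
      also have "sqrt \<beta> \<le> sqrt (real n)" using sum a3 by simp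
      finally show ?thesis by simp
    qed
    have "a * (- ln m) \<le> a * \<bar>ln m\<bar>" "b * (- ln (1 - m)) \<le> b * \<bar>ln (1 - m)\<bar>"
      using ab by (intro mult_left_mono; simp)+
    moreover have "ln (Beta a b) \<le> \<bar>ln (Beta a b)\<bar>" by simp
    ultimately show "ln (Beta a b) - ln (Beta \<alpha> \<beta>) + (\<alpha> - a) * ln m + (\<beta> - b) * ln (1 - m)
        \<le> (\<bar>ln (Beta a b)\<bar> + a * \<bar>ln m\<bar> + b * \<bar>ln (1 - m)\<bar> + 1) + 8 * sqrt (real n)"
      using lb' la lbb by (simp add: algebra_simps)
    show "0 \<le> (\<bar>ln (Beta a b)\<bar> + a * \<bar>ln m\<bar> + b * \<bar>ln (1 - m)\<bar> + 1) + 8 * sqrt (real n)"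
      using ab by simp
  qed
  finally show ?thesis unfolding \<alpha>_def \<beta>_def .
qed

theorem mainTheorem12:
  fixes q0 :: "nat \<Rightarrow> real" and \<theta>0 a b :: real
  assumes "0 < \<theta>0" and "\<theta>0 < 1/2" and "0 < a" and "0 < b"
    and "\<forall>i. 0 \<le> q0 i" and "(q0 has_sum 1) UNIV"
    and "summable (\<lambda>i. (real i)\<^sup>2 * q0 i)"
  shows "\<exists>C > 0. \<exists>n0::nat. \<forall>n \<ge> n0.
     (let \<epsilon> = C / sqrt (real n); \<rho> = rbeta (2 * real n * \<theta>0) (real n * (1 - 2 * \<theta>0)) in
       (\<integral>\<^sup>+ \<theta>. ennreal (KL (path_law q0 \<theta>0 n) (path_law q0 \<theta> n)) \<partial>\<rho>) \<le> ennreal (real n * \<epsilon>)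
     \<and> (\<integral>\<^sup>+ \<theta>. ennreal (var_under (path_law q0 \<theta>0 n) (log_lik_ratio q0 n \<theta> \<theta>0)) \<partial>\<rho>)
           \<le> ennreal (real n * \<epsilon>)
     \<and> KL \<rho> (rbeta a b) \<le> real n * \<epsilon>)"
proof -
  have t0: "0 < \<theta>0" "\<theta>0 < 1/2" using assms by auto
  obtain Q where Q: "pmf Q = q0" using exists_pmf[OF assms(5,6)] by blast
  define m where "m = 2 * \<theta>0"
  have m: "0 < m" "m < 1" using t0 unfolding m_def by auto
  define K3 where "K3 = \<bar>ln (Beta a b)\<bar> + a * \<bar>ln m\<bar> + b * \<bar>ln (1 - m)\<bar> + 1"
  have K3: "0 \<le> K3" unfolding K3_def using assms by simp
  define K2 where "K2 = 132 / m^2 + 9"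
  have K2: "0 \<le> K2" unfolding K2_def by simp
  define C where "C = 2 + K2 + K3 + 8"
  define Z where "Z = (a + b + 4) / m + (a + b + 4) / (1 - m)"
  define n0 where "n0 = nat \<lceil>Z\<rceil>"
  show ?thesis
  proof (intro exI[of _ C] conjI exI[of _ n0] allI impI)
    show "0 < C" unfolding C_def using K2 K3 by simp
    fix n assume n: "n0 \<le> n"
    have Zn: "Z \<le> real n" using n unfolding n0_def by linarith
    have Z1: "(a + b + 4) / m \<le> Z" "(a + b + 4) / (1 - m) \<le> Z" unfolding Z_def using m assms by auto
    have "(a + b + 4) / m \<le> real n" using Z1 Zn by linarith
    then have big1: "a + b + 4 \<le> m * real n" using m by (simp add: field_simps)
    have "(a + b + 4) / (1 - m) \<le> real n" using Z1 Zn by linarith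
    then have big2: "a + b + 4 \<le> (1 - m) * real n" using m by (simp add: field_simps)
    have mn: "4 \<le> m * real n" using big1 assms by linarith
    have npos: "0 < real n" using npos[OF t0 m_def mn] .
    have s1: "1 \<le> sqrt (real n)" using npos by simp
    have eps: "real n * (C / sqrt (real n)) = C * sqrt (real n)"
      using npos by (metis real_div_sqrt less_eq_real_def of_nat_0_le_iff times_divide_eq_right mult.commute)
    have rho: "rbeta (2 * real n * \<theta>0) (real n * (1 - 2 * \<theta>0)) = rbeta (m * real n) ((1 - m) * real n)"
      unfolding m_def by (simp add: algebra_simps)
    have Cs: "C \<le> C * sqrt (real n)" using s1 K2 K3 unfolding C_def by (simp add: mult_le_cancel_left1)
    have c1: "(\<integral>\<^sup>+ \<theta>. ennreal (KL (path_law q0 \<theta>0 n) (path_law q0 \<theta> n)) \<partial>rbeta (m * real n) ((1 - m) * real n)) \<le> ennreal (C * sqrt (real n))"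
    proof -
      have "(\<integral>\<^sup>+ \<theta>. ennreal (KL (path_law q0 \<theta>0 n) (path_law q0 \<theta> n)) \<partial>rbeta (m * real n) ((1 - m) * real n)) \<le> ennreal 2"
        using C1_bound[OF t0 m_def mn, of Q] unfolding Q .
      also have "ennreal 2 \<le> ennreal (C * sqrt (real n))" using Cs K2 K3 unfolding C_def by (intro ennreal_leI) linarith
      finally show ?thesis .
    qed
    have c2: "(\<integral>\<^sup>+ \<theta>. ennreal (var_under (path_law q0 \<theta>0 n) (log_lik_ratio q0 n \<theta> \<theta>0)) \<partial>rbeta (m * real n) ((1 - m) * real n)) \<le> ennreal (C * sqrt (real n))"
    proof -
      have "(\<integral>\<^sup>+ \<theta>. ennreal (var_under (path_law q0 \<theta>0 n) (log_lik_ratio q0 n \<theta> \<theta>0)) \<partial>rbeta (m * real n) ((1 - m) * real n)) \<le> ennreal K2"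
        using C2_bound[OF t0 m_def mn, of Q] unfolding Q K2_def .
      also have "ennreal K2 \<le> ennreal (C * sqrt (real n))" using Cs K2 K3 unfolding C_def by (intro ennreal_leI) linarith
      finally show ?thesis .
    qed
    have c3: "KL (rbeta (m * real n) ((1 - m) * real n)) (rbeta a b) \<le> C * sqrt (real n)"
    proof -
      have "KL (rbeta (m * real n) ((1 - m) * real n)) (rbeta a b) \<le> K3 + 8 * sqrt (real n)"
        unfolding K3_def using assms m big1 big2 by (intro C3_bound) auto
      also have "\<dots> \<le> C * sqrt (real n)"
      proof -
        have "K3 \<le> K3 * sqrt (real n)" using K3 s1 by (simp add: mult_le_cancel_left1)
        moreover have "0 \<le> (2 + K2) * sqrt (real n)" using K2 s1 by simp
        ultimately show ?thesis unfolding C_def by (simp add: algebra_simps)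
      qed
      finally show ?thesis .
    qed
    show "let \<epsilon> = C / sqrt (real n); \<rho> = rbeta (2 * real n * \<theta>0) (real n * (1 - 2 * \<theta>0)) in
       (\<integral>\<^sup>+ \<theta>. ennreal (KL (path_law q0 \<theta>0 n) (path_law q0 \<theta> n)) \<partial>\<rho>) \<le> ennreal (real n * \<epsilon>)
     \<and> (\<integral>\<^sup>+ \<theta>. ennreal (var_under (path_law q0 \<theta>0 n) (log_lik_ratio q0 n \<theta> \<theta>0)) \<partial>\<rho>)
           \<le> ennreal (real n * \<epsilon>)
     \<and> KL \<rho> (rbeta a b) \<le> real n * \<epsilon>"
      unfolding Let_def rho eps using c1 c2 c3 by simp
  qed
qed

end
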